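(* Let $n\ge2$, let $u_0,\dots,u_{n-2}$ be unitaries on $(\mathbb{C}^2)^{\otimes n}$ with $u_t$ acting on qubits $t,t+1$, and $u_{n-1}=c\,\mathbb{1}$ with $|c|=1$. Set $U_{t:0}=u_{t-1}\cdots u_0$ ($U_{0:0}=\mathbb{1}$), and for an increasing tuple $\mathbf t=(t_1<\dots<t_m)$ in $\{0,\dots,n-1\}$ set $U_{\mathbf t:0}=U_{t_1:0}U_{t_2:0}\cdots U_{t_m:0}$ and $c_{\mathbf t}^\dagger=c_{t_1}^\dagger\cdots c_{t_m}^\dagger$, where $c_0,\dots,c_{n-1}$ are spinless fermion modes with vacuum $|\Omega\rangle$. Let $U_{n:0}|\phi\rangle=e^{i\phi}|\phi\rangle$. For distinct momenta $\mathbf k=(k_1,\dots,k_M)$ with $k_j\in\frac{2\pi}{n}\{0,\dots,n-1\}$, let $$c^\dagger_{\mathbf k,\phi}=\prod_{k\in\mathbf k}\Big[\tfrac{1}{\sqrt n}\sum_{t=0}^{n-1}e^{i(k-\phi/n)t}c_t^\dagger\Big],$$ write $c^\dagger_{\mathbf k,\phi}|\Omega\rangle=\sum_{\mathbf t}\varphi_{\mathbf k,\phi}(\mathbf t)\,c_{\mathbf t}^\dagger|\Omega\rangle$ (sum over increasing $M$-tuples), and define the eigenstate of the many-hand periodic clock Hamiltonian $H=\sum_{t=0}^{n-1}[\mathbb{1}\otimes c_t^\dagger c_t-\frac12(u_t\otimes c^\dagger_{t+1}c_t+\mathrm{h.c.})]$ ($c_n\equiv c_0$) $$|\Psi_{\mathbf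 k,\phi}\rangle=\sum_{\mathbf t}\varphi_{\mathbf k,\phi}(\mathbf t)\,U_{\mathbf t:0}|\phi\rangle\otimes c_{\mathbf t}^\dagger|\Omega\rangle .$$ Let $A$ consist of the qubits and fermion modes at the sites of a cyclic interval of $\{0,\dots,n-1\}$. Then $$S^{(2)}_A(|\Psi_{\mathbf k,\phi}\rangle)\ \ge\ S^{(2)}_A(c^\dagger_{\mathbf k,\phi}|\Omega\rangle)+\min_{\mathbf t}S^{(2)}_A(U_{\mathbf t:0}|\phi\rangle),$$ where the minimum runs over increasing tuples $\mathbf t$ with at most $M$ entries, and in the last term $A$ denotes its set of qubits.
   Context: The second Rényi entropy is $S^{(2)}_A(|\Psi\rangle)=-\ln\mathrm{Tr}(\rho_A^2)$, with $\rho_A$ the reduced density matrix of $|\Psi\rangle$ on $A$ (for fermionic modes, via the standard fermionic partial trace, equivalently Jordan–Wigner two-level sites). *)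

theory Defs
  imports Complex_Main
begin

text \<open>Computational basis of (C^2)^{tensor n}: subsets S of {..<n} (the qubits in state 1).
  Fermionic Fock space on modes 0..n-1 (Jordan-Wigner ordering): basis indexed by the
  set F of occupied modes; the basis vector for F = {t1<...<tm} is c_t1^dag ... c_tm^dag |Omega>.\<close>

type_synonym qvec = "nat set \<Rightarrow> complex"
type_synonym qmat = "nat set \<Rightarrow> nat set \<Rightarrow> complex"

definition idm :: qmat where
  "idm S T = (if S = T then 1 else 0)"

definition mmult :: "nat \<Rightarrow> qmat \<Rightarrow> qmat \<Rightarrow> qmat" where
  "mmult n A B S T = (\<Sum>R\<in>Pow {..<n}. A S R * B R T)"

definition mvec :: "nat \<Rightarrow> qmat \<Rightarrow> qvec \<Rightarrow> qvec" where
  "mvec n A v S = (\<Sum>R\<in>Pow {..<n}. A S R * v R)"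

definition unitary_on :: "nat \<Rightarrow> qmat \<Rightarrow> bool" where
  "unitary_on n U \<longleftrightarrow> (\<forall>S\<in>Pow {..<n}. \<forall>T\<in>Pow {..<n}.
      (\<Sum>R\<in>Pow {..<n}. U S R * cnj (U T R)) = idm S T)"

definition acts_on_pair :: "nat \<Rightarrow> qmat \<Rightarrow> nat \<Rightarrow> bool" where
  "acts_on_pair n U t \<longleftrightarrow> (\<exists>w :: bool \<Rightarrow> bool \<Rightarrow> bool \<Rightarrow> bool \<Rightarrow> complex.
      \<forall>S\<in>Pow {..<n}. \<forall>T\<in>Pow {..<n}.
        U S T = (if S - {t, Suc t} = T - {t, Suc t}
                 then w (t \<in> S) (Suc t \<in> S) (t \<in> T) (Suc t \<in> T) else 0))"

fun Uprod :: "nat \<Rightarrow> (nat \<Rightarrow> qmat) \<Rightarrow> nat \<Rightarrow> qmat" where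
  "Uprod n u 0 = idm"
| "Uprod n u (Suc t) = mmult n (u t) (Uprod n u t)"

definition UT :: "nat \<Rightarrow> (nat \<Rightarrow> qmat) \<Rightarrow> nat set \<Rightarrow> qvec \<Rightarrow> qvec" where
  "UT n u T v = foldr (\<lambda>t w. mvec n (Uprod n u t) w) (sorted_list_of_set T) v"

definition vac :: qvec where
  "vac F = (if F = {} then 1 else 0)"

definition cdag :: "nat \<Rightarrow> qvec \<Rightarrow> qvec" where
  "cdag t v F = (if t \<in> F then (-1) ^ card {s\<in>F. s < t} * v (F - {t}) else 0)"

definition cdag_mom :: "nat \<Rightarrow> real \<Rightarrow> real \<Rightarrow> qvec \<Rightarrow> qvec" where
  "cdag_mom n theta k v F =
     (\<Sum>t<n. complex_of_real (1 / sqrt (real n))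
             * exp (\<i> * complex_of_real ((k - theta / real n) * real t)) * cdag t v F)"

text \<open>c^dag_{k,theta} |Omega> for momenta k_j = 2 pi m_j / n, product in the order k_1 ... k_M.
  Its coefficient at F is varphi_{k,theta}(F).\<close>
definition slater :: "nat \<Rightarrow> real \<Rightarrow> nat list \<Rightarrow> qvec" where
  "slater n theta ms =
     foldr (\<lambda>m v. cdag_mom n theta (2 * pi * real m / real n) v) ms vac"

text \<open>The eigenstate Psi_{k,theta}: amplitude at (qubit basis S, fermion occupation F).\<close>
definition Psi :: "nat \<Rightarrow> (nat \<Rightarrow> qmat) \<Rightarrow> real \<Rightarrow> qvec \<Rightarrow> nat list \<Rightarrow> nat set \<Rightarrow> nat set \<Rightarrow> complex" where
  "Psi n u theta phi ms S F = slater n theta ms F * UT n u F phi S"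

text \<open>Tr(rho_A^2) for a pure state on n two-level sites (qubits or JW fermion modes).\<close>
definition purity :: "nat \<Rightarrow> nat set \<Rightarrow> qvec \<Rightarrow> real" where
  "purity n A \<psi> = Re (\<Sum>a\<in>Pow A. \<Sum>a'\<in>Pow A. \<Sum>b\<in>Pow ({..<n} - A). \<Sum>b'\<in>Pow ({..<n} - A).
      \<psi> (a \<union> b) * cnj (\<psi> (a' \<union> b)) * \<psi> (a' \<union> b') * cnj (\<psi> (a \<union> b')))"

definition renyi2 :: "nat \<Rightarrow> nat set \<Rightarrow> qvec \<Rightarrow> real" where
  "renyi2 n A \<psi> = - ln (purity n A \<psi>)"

text \<open>Same for the joint system qubits tensor fermions, with A containing both the qubits
  and the fermion modes at sites in A.\<close>
definition purity_joint :: "nat \<Rightarrow> nat set \<Rightarrow> (nat set \<Rightarrow> nat set \<Rightarrow> complex) \<Rightarrow> real" where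
  "purity_joint n A \<Psi> = Re (
     \<Sum>aq\<in>Pow A. \<Sum>af\<in>Pow A. \<Sum>aq'\<in>Pow A. \<Sum>af'\<in>Pow A.
     \<Sum>bq\<in>Pow ({..<n} - A). \<Sum>bf\<in>Pow ({..<n} - A).
     \<Sum>bq'\<in>Pow ({..<n} - A). \<Sum>bf'\<in>Pow ({..<n} - A).
       \<Psi> (aq \<union> bq) (af \<union> bf) * cnj (\<Psi> (aq' \<union> bq) (af' \<union> bf))
     * \<Psi> (aq' \<union> bq') (af' \<union> bf') * cnj (\<Psi> (aq \<union> bq') (af \<union> bf')))"

definition renyi2_joint :: "nat \<Rightarrow> nat set \<Rightarrow> (nat set \<Rightarrow> nat set \<Rightarrow> complex) \<Rightarrow> real" where
  "renyi2_joint n A \<Psi> = - ln (purity_joint n A \<Psi>)"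

definition cyclic_interval :: "nat \<Rightarrow> nat set \<Rightarrow> bool" where
  "cyclic_interval n A \<longleftrightarrow> (\<exists>a l. a < n \<and> l \<le> n \<and> A = {(a + j) mod n | j. j < l})"

end

theory Submission
  imports Defs "Jordan_Normal_Form.Determinant"
begin

definition eqv :: "nat \<Rightarrow> qvec \<Rightarrow> qvec \<Rightarrow> bool" where
  "eqv n v w \<longleftrightarrow> (\<forall>S\<in>Pow {..<n}. v S = w S)"
definition eqm :: "nat \<Rightarrow> qmat \<Rightarrow> qmat \<Rightarrow> bool" where
  "eqm n A B \<longleftrightarrow> (\<forall>S\<in>Pow {..<n}. \<forall>T\<in>Pow {..<n}. A S T = B S T)"
definition adj :: "qmat \<Rightarrow> qmat" where
  "adj U S T = cnj (U T S)"
definition smat :: "complex \<Rightarrow> qmat \<Rightarrow> qmat" where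
  "smat c U S T = c * U S T"

lemma eqv_refl[simp]: "eqv n v v" by (simp add: eqv_def)
lemma eqv_sym: "eqv n v w \<Longrightarrow> eqv n w v" by (simp add: eqv_def)
lemma eqv_trans[trans]: "eqv n u v \<Longrightarrow> eqv n v w \<Longrightarrow> eqv n u w" by (simp add: eqv_def)
lemma eqm_refl[simp]: "eqm n v v" by (simp add: eqm_def)
lemma eqm_sym: "eqm n v w \<Longrightarrow> eqm n w v" by (simp add: eqm_def)
lemma eqm_trans[trans]: "eqm n u v \<Longrightarrow> eqm n v w \<Longrightarrow> eqm n u w" by (simp add: eqm_def)

lemma mmult_assoc: "mmult n (mmult n A B) C = mmult n A (mmult n B C)"
proof -
  have "mmult n (mmult n A B) C S T = mmult n A (mmult n B C) S T" for S T
    unfolding mmult_def sum_distrib_left sum_distrib_right mult.assoc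
    by (rule sum.swap)
  then show ?thesis by (auto simp: fun_eq_iff)
qed

lemma mvec_mmult: "mvec n (mmult n A B) v = mvec n A (mvec n B v)"
proof -
  have "mvec n (mmult n A B) v S = mvec n A (mvec n B v) S" for S
    unfolding mmult_def mvec_def sum_distrib_left sum_distrib_right mult.assoc
    by (rule sum.swap)
  then show ?thesis by (auto simp: fun_eq_iff)
qed

lemma adj_mmult: "adj (mmult n A B) = mmult n (adj B) (adj A)"
  by (auto simp: fun_eq_iff adj_def mmult_def mult.commute)

lemma adj_adj[simp]: "adj (adj A) = A"
  by (auto simp: fun_eq_iff adj_def)

lemma adj_idm[simp]: "adj idm = idm"
  by (auto simp: fun_eq_iff adj_def idm_def)

lemma adj_smat: "adj (smat c A) = smat (cnj c) (adj A)"
  by (auto simp: fun_eq_iff adj_def smat_def)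

lemma sum_ifl: "finite X \<Longrightarrow> (\<Sum>R\<in>X. (if S = R then 1 else 0) * f R) = (if S \<in> X then f S else (0::complex))"
proof -
  have "(\<Sum>R\<in>X. (if S = R then 1 else 0) * f R) = (\<Sum>R\<in>X. if S = R then f R else 0)"
    by (rule sum.cong) auto
  then show "finite X \<Longrightarrow> ?thesis" by simp
qed

lemma sum_ifr: "finite X \<Longrightarrow> (\<Sum>R\<in>X. f R * (if R = T then 1 else 0)) = (if T \<in> X then f T else (0::complex))"
proof -
  have "(\<Sum>R\<in>X. f R * (if R = T then 1 else 0)) = (\<Sum>R\<in>X. if R = T then f R else 0)"
    by (rule sum.cong) auto
  then show "finite X \<Longrightarrow> ?thesis" by simp
qed

lemma mmult_idm_left: "eqm n (mmult n idm A) A"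
  by (auto simp: eqm_def mmult_def idm_def sum_ifl)

lemma mmult_idm_right: "eqm n (mmult n A idm) A"
  by (auto simp: eqm_def mmult_def idm_def sum_ifr)

lemma mvec_idm: "eqv n (mvec n idm v) v"
  by (auto simp: eqv_def mvec_def idm_def sum_ifl)

lemma mmult_cong: "eqm n A A' \<Longrightarrow> eqm n B B' \<Longrightarrow> eqm n (mmult n A B) (mmult n A' B')"
  unfolding eqm_def mmult_def by (auto intro!: sum.cong)

lemma mvec_cong: "eqm n A A' \<Longrightarrow> eqv n v v' \<Longrightarrow> eqv n (mvec n A v) (mvec n A' v')"
  unfolding eqm_def eqv_def mvec_def by (auto intro!: sum.cong)

lemma mvec_cong2: "eqv n v v' \<Longrightarrow> mvec n A v = mvec n A v'"
  unfolding eqv_def mvec_def by (auto intro!: sum.cong simp: fun_eq_iff)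

lemma adj_cong: "eqm n A A' \<Longrightarrow> eqm n (adj A) (adj A')"
  unfolding eqm_def adj_def by auto

lemma smat_mmult_left: "mmult n (smat c A) B = smat c (mmult n A B)"
  by (auto simp: fun_eq_iff smat_def mmult_def sum_distrib_left mult.assoc)
lemma smat_mmult_right: "mmult n A (smat c B) = smat c (mmult n A B)"
  by (auto simp: fun_eq_iff smat_def mmult_def sum_distrib_left mult.assoc mult.left_commute)
lemma smat_mvec: "mvec n (smat c A) v = (\<lambda>S. c * mvec n A v S)"
  by (auto simp: fun_eq_iff smat_def mvec_def sum_distrib_left mult.assoc)
lemma smat_smat: "smat c (smat d A) = smat (c * d) A"
  by (auto simp: fun_eq_iff smat_def)
lemma smat_one[simp]: "smat 1 A = A"
  by (auto simp: fun_eq_iff smat_def)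
lemma smat_cong: "eqm n A A' \<Longrightarrow> eqm n (smat c A) (smat c A')"
  unfolding eqm_def smat_def by auto

definition runit :: "nat \<Rightarrow> qmat \<Rightarrow> bool" where
  "runit n U \<longleftrightarrow> eqm n (mmult n U (adj U)) idm"
definition cunit :: "nat \<Rightarrow> qmat \<Rightarrow> bool" where
  "cunit n U \<longleftrightarrow> eqm n (mmult n (adj U) U) idm"
definition uni :: "nat \<Rightarrow> qmat \<Rightarrow> bool" where
  "uni n U \<longleftrightarrow> runit n U \<and> cunit n U"

lemma unitary_on_runit: "unitary_on n U \<longleftrightarrow> runit n U"
  by (simp add: unitary_on_def runit_def eqm_def mmult_def adj_def)

lemma uni_adj: "uni n U \<Longrightarrow> uni n (adj U)"
  by (simp add: uni_def runit_def cunit_def)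

lemma uni_idm: "uni n idm"
  by (simp add: uni_def runit_def cunit_def mmult_idm_left)

lemma uni_smat: "cmod c = 1 \<Longrightarrow> uni n U \<Longrightarrow> uni n (smat c U)"
proof -
  assume c: "cmod c = 1" and U: "uni n U"
  have cc: "c * cnj c = 1" "cnj c * c = 1"
    using c complex_norm_square[of c] by (simp_all add: complex_mult_cnj mult.commute)
  show ?thesis using U unfolding uni_def runit_def cunit_def
    by (simp add: adj_smat smat_mmult_left smat_mmult_right smat_smat cc mult.commute)
qed

lemma uni_mmult:
  assumes A: "uni n A" and B: "uni n B"
  shows "uni n (mmult n A B)"
proof -
  have "eqm n (mmult n (mmult n A B) (adj (mmult n A B))) (mmult n A (mmult n (mmult n B (adj B)) (adj A)))"
    by (simp add: adj_mmult mmult_assoc)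
  also have "eqm n \<dots> (mmult n A (mmult n idm (adj A)))"
    using B unfolding uni_def runit_def by (intro mmult_cong mmult_cong) auto
  also have "eqm n \<dots> (mmult n A (adj A))"
    by (intro mmult_cong mmult_idm_left) auto
  also have "eqm n \<dots> idm" using A unfolding uni_def runit_def by auto
  finally have r: "runit n (mmult n A B)" unfolding runit_def .
  have "eqm n (mmult n (adj (mmult n A B)) (mmult n A B)) (mmult n (adj B) (mmult n (mmult n (adj A) A) B))"
    by (simp add: adj_mmult mmult_assoc)
  also have "eqm n \<dots> (mmult n (adj B) (mmult n idm B))"
    using A unfolding uni_def cunit_def by (intro mmult_cong mmult_cong) auto
  also have "eqm n \<dots> (mmult n (adj B) B)"
    by (intro mmult_cong mmult_idm_left) auto
  also have "eqm n \<dots> idm" using B unfolding uni_def cunit_def by auto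
  finally have c: "cunit n (mmult n A B)" unfolding cunit_def .
  show ?thesis using r c by (simp add: uni_def)
qed

lemma uni_cong: "eqm n A A' \<Longrightarrow> uni n A \<Longrightarrow> uni n A'"
proof -
  assume e: "eqm n A A'" and u: "uni n A"
  have "eqm n (mmult n A' (adj A')) (mmult n A (adj A))"
    by (intro mmult_cong adj_cong eqm_sym[OF e] )
  moreover have "eqm n (mmult n (adj A') A') (mmult n (adj A) A)"
    by (intro mmult_cong adj_cong eqm_sym[OF e] )
  ultimately show ?thesis using u unfolding uni_def runit_def cunit_def
    using eqm_trans by blast
qed

lemma runit_cunit:
  assumes r: "runit n U"
  shows "cunit n U"
proof -
  define P where "P = Pow {..<n::nat}"
  define N where "N = card P"
  have fin: "finite P" unfolding P_def by simp
  obtain h where h: "bij_betw h {0..<N} P"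
    using ex_bij_betw_nat_finite[OF fin] unfolding N_def by blast
  have reidx: "(\<Sum>R\<in>P. f R) = (\<Sum>k\<in>{0..<N}. f (h k))" for f :: "nat set \<Rightarrow> complex"
    using sum.reindex_bij_betw[OF h, of f] by simp
  define M where "M = mat N N (\<lambda>(i,j). U (h i) (h j))"
  define Mh where "Mh = mat N N (\<lambda>(i,j). cnj (U (h j) (h i)))"
  have hP: "i < N \<Longrightarrow> h i \<in> P" for i using h by (auto simp: bij_betw_def)
  have hinj: "i < N \<Longrightarrow> j < N \<Longrightarrow> h i = h j \<longleftrightarrow> i = j" for i j
    using h by (auto simp: bij_betw_def inj_on_def)
  have "M * Mh = 1\<^sub>m N"
  proof (rule eq_matI)
    fix i j assume i: "i < dim_row (1\<^sub>m N)" and j: "j < dim_col (1\<^sub>m N)"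
    have "(M * Mh) $$ (i,j) = (\<Sum>k\<in>{0..<N}. U (h i) (h k) * cnj (U (h j) (h k)))"
      using i j by (simp add: M_def Mh_def scalar_prod_def)
    also have "\<dots> = (\<Sum>R\<in>P. U (h i) R * cnj (U (h j) R))" by (simp add: reidx)
    also have "\<dots> = idm (h i) (h j)"
      using r hP i j unfolding runit_def eqm_def mmult_def adj_def P_def by auto
    also have "\<dots> = 1\<^sub>m N $$ (i,j)" using i j hinj by (simp add: idm_def)
    finally show "(M * Mh) $$ (i,j) = 1\<^sub>m N $$ (i,j)" .
  qed (auto simp: M_def Mh_def)
  then have MM: "Mh * M = 1\<^sub>m N"
    by (intro mat_mult_left_right_inverse[of M N Mh]) (auto simp: M_def Mh_def)
  show ?thesis unfolding cunit_def eqm_def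
  proof (intro ballI)
    fix S T assume S: "S \<in> Pow {..<n}" and T: "T \<in> Pow {..<n}"
    have "S \<in> h ` {0..<N}" "T \<in> h ` {0..<N}" using h S T unfolding P_def bij_betw_def by simp_all
    then obtain i j where i: "i < N" "h i = S" and j: "j < N" "h j = T" by auto
    have "mmult n (adj U) U S T = (\<Sum>R\<in>P. cnj (U R (h i)) * U R (h j))"
      using i j by (simp add: mmult_def adj_def P_def)
    also have "\<dots> = (\<Sum>k\<in>{0..<N}. cnj (U (h k) (h i)) * U (h k) (h j))" by (simp add: reidx)
    also have "\<dots> = (Mh * M) $$ (i,j)"
      using i j by (simp add: M_def Mh_def scalar_prod_def)
    also have "\<dots> = idm S T" using MM i j hinj[of i j] by (auto simp: idm_def)
    finally show "mmult n (adj U) U S T = idm S T" .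
  qed
qed

lemma runit_uni: "runit n U \<Longrightarrow> uni n U"
  using runit_cunit uni_def by blast

definition nrm :: "nat \<Rightarrow> qvec \<Rightarrow> real" where
  "nrm n v = (\<Sum>S\<in>Pow {..<n}. (cmod (v S))\<^sup>2)"

lemma cmod_sq_cnj: "complex_of_real ((cmod z)\<^sup>2) = z * cnj z"
  by (rule complex_norm_square)


lemma pow_split_bij:
  shows "bij_betw (\<lambda>(a,b). a \<union> b) (Pow (X \<inter> Q) \<times> Pow (X - Q)) (Pow X)"
proof (rule bij_betw_imageI)
  show "inj_on (\<lambda>(a,b). a \<union> b) (Pow (X \<inter> Q) \<times> Pow (X - Q))"
  proof (rule inj_onI, clarify)
    fix a b a' b' assume "a \<subseteq> X \<inter> Q" "b \<subseteq> X - Q" "a' \<subseteq> X \<inter> Q" "b' \<subseteq> X - Q" "a \<union> b = a' \<union> b'"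
    then show "a = a' \<and> b = b'" by blast
  qed
  show "(\<lambda>(a,b). a \<union> b) ` (Pow (X \<inter> Q) \<times> Pow (X - Q)) = Pow X"
  proof
    show "(\<lambda>(a,b). a \<union> b) ` (Pow (X \<inter> Q) \<times> Pow (X - Q)) \<subseteq> Pow X" by auto
    show "Pow X \<subseteq> (\<lambda>(a,b). a \<union> b) ` (Pow (X \<inter> Q) \<times> Pow (X - Q))"
    proof
      fix S assume "S \<in> Pow X"
      then have "(S \<inter> Q, S - Q) \<in> Pow (X \<inter> Q) \<times> Pow (X - Q)" "S = (S \<inter> Q) \<union> (S - Q)" by auto
      then show "S \<in> (\<lambda>(a,b). a \<union> b) ` (Pow (X \<inter> Q) \<times> Pow (X - Q))"
        by (metis (no_types, lifting) case_prod_conv image_eqI)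
    qed
  qed
qed

lemma sum_split:
  assumes "finite X"
  shows "(\<Sum>S\<in>Pow X. f S) = (\<Sum>a\<in>Pow (X \<inter> Q). \<Sum>b\<in>Pow (X - Q). f (a \<union> b))"
proof -
  have "(\<Sum>S\<in>Pow X. f S) = (\<Sum>p\<in>Pow (X \<inter> Q) \<times> Pow (X - Q). f (case p of (a,b) \<Rightarrow> a \<union> b))"
    using sum.reindex_bij_betw[OF pow_split_bij[of X Q], of f] by simp
  also have "\<dots> = (\<Sum>(a,b)\<in>Pow (X \<inter> Q) \<times> Pow (X - Q). f (a \<union> b))"
    by (rule sum.cong) auto
  also have "\<dots> = (\<Sum>a\<in>Pow (X \<inter> Q). \<Sum>b\<in>Pow (X - Q). f (a \<union> b))"
    by (rule sum.cartesian_product[symmetric])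
  finally show ?thesis .
qed

lemma sum_single:
  assumes "finite X" "x0 \<in> X" "\<And>x. x \<in> X \<Longrightarrow> x \<noteq> x0 \<Longrightarrow> f x = 0"
  shows "(\<Sum>x\<in>X. f x) = f x0"
proof -
  have "(\<Sum>x\<in>X. f x) = (\<Sum>x\<in>X. if x = x0 then f x0 else 0)"
    using assms by (intro sum.cong) auto
  also have "\<dots> = f x0" using assms by simp
  finally show ?thesis .
qed

definition loc :: "nat \<Rightarrow> nat set \<Rightarrow> qmat \<Rightarrow> bool" where
  "loc n Q U \<longleftrightarrow> (\<exists>w. \<forall>S\<in>Pow {..<n}. \<forall>T\<in>Pow {..<n}.
     U S T = (if S - Q = T - Q then w (S \<inter> Q) (T \<inter> Q) else 0))"

lemma loc_mono:
  assumes "loc n Q U" "Q \<subseteq> Q'"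
  shows "loc n Q' U"
proof -
  obtain w where w: "\<forall>S\<in>Pow {..<n}. \<forall>T\<in>Pow {..<n}.
     U S T = (if S - Q = T - Q then w (S \<inter> Q) (T \<inter> Q) else 0)"
    using assms unfolding loc_def by blast
  show ?thesis unfolding loc_def
  proof (intro exI[of _ "\<lambda>X Y. if X - Q = Y - Q then w (X \<inter> Q) (Y \<inter> Q) else 0"] ballI)
    fix S T assume S: "S \<in> Pow {..<n}" and T: "T \<in> Pow {..<n}"
    have e1: "S \<inter> Q' \<inter> Q = S \<inter> Q" "T \<inter> Q' \<inter> Q = T \<inter> Q" using assms(2) by auto
    have e2: "(S - Q = T - Q) \<longleftrightarrow> (S - Q' = T - Q' \<and> S \<inter> Q' - Q = T \<inter> Q' - Q)"
      using assms(2) by blast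
    show "U S T = (if S - Q' = T - Q' then (if S \<inter> Q' - Q = T \<inter> Q' - Q then w (S \<inter> Q' \<inter> Q) (T \<inter> Q' \<inter> Q) else 0) else 0)"
      using w S T e1 e2 by auto
  qed
qed

lemma loc_idm: "loc n Q idm"
  unfolding loc_def
  by (rule exI[of _ idm]) (auto simp: idm_def)

lemma loc_smat: "loc n Q U \<Longrightarrow> loc n Q (smat c U)"
  unfolding loc_def smat_def
  by (erule exE, rule_tac x="\<lambda>X Y. c * w X Y" in exI) auto

lemma loc_adj: "loc n Q U \<Longrightarrow> loc n Q (adj U)"
  unfolding loc_def adj_def
  by (erule exE, rule_tac x="\<lambda>X Y. cnj (w Y X)" in exI) auto

lemma loc_cong: "eqm n U U' \<Longrightarrow> loc n Q U \<Longrightarrow> loc n Q U'"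
  unfolding loc_def eqm_def by metis

lemma loc_entry:
  assumes "loc n Q U" "S \<in> Pow {..<n}" "T \<in> Pow {..<n}"
  shows "U S T = (if S - Q = T - Q then U (S \<inter> Q) (T \<inter> Q) else 0)"
proof -
  obtain w where w: "\<forall>S\<in>Pow {..<n}. \<forall>T\<in>Pow {..<n}.
     U S T = (if S - Q = T - Q then w (S \<inter> Q) (T \<inter> Q) else 0)"
    using assms unfolding loc_def by blast
  have a: "S \<inter> Q \<in> Pow {..<n}" "T \<inter> Q \<in> Pow {..<n}" using assms by auto
  have b: "S \<inter> Q - Q = {}" "T \<inter> Q - Q = {}" "S \<inter> Q \<inter> Q = S \<inter> Q" "T \<inter> Q \<inter> Q = T \<inter> Q" by auto
  have "U (S \<inter> Q) (T \<inter> Q) = w (S \<inter> Q) (T \<inter> Q)"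
    using w[rule_format, OF a] b by simp
  then show ?thesis using w assms(2,3) by auto
qed

lemma loc_mmult:
  assumes U: "loc n Q U" and V: "loc n Q V"
  shows "loc n Q (mmult n U V)"
proof -
  let ?X = "{..<n::nat}"
  show ?thesis unfolding loc_def
  proof (intro exI[of _ "\<lambda>X Y. \<Sum>r\<in>Pow (?X \<inter> Q). U X r * V r Y"] ballI)
    fix S T assume S: "S \<in> Pow ?X" and T: "T \<in> Pow ?X"
    have "mmult n U V S T = (\<Sum>r\<in>Pow (?X \<inter> Q). \<Sum>b\<in>Pow (?X - Q). U S (r \<union> b) * V (r \<union> b) T)"
      unfolding mmult_def by (rule sum_split) simp
    also have "\<dots> = (\<Sum>r\<in>Pow (?X \<inter> Q). U S (r \<union> (S - Q)) * V (r \<union> (S - Q)) T)"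
    proof (rule sum.cong[OF refl])
      fix r assume r: "r \<in> Pow (?X \<inter> Q)"
      show "(\<Sum>b\<in>Pow (?X - Q). U S (r \<union> b) * V (r \<union> b) T) = U S (r \<union> (S - Q)) * V (r \<union> (S - Q)) T"
      proof (rule sum_single)
        fix b assume b: "b \<in> Pow (?X - Q)" "b \<noteq> S - Q"
        have "S - Q \<noteq> r \<union> b - Q" using r b by auto
        then show "U S (r \<union> b) * V (r \<union> b) T = 0"
          using loc_entry[OF U S, of "r \<union> b"] r b by auto
      qed (use S in auto)
    qed
    also have "\<dots> = (if S - Q = T - Q then \<Sum>r\<in>Pow (?X \<inter> Q). U (S \<inter> Q) r * V r (T \<inter> Q) else 0)"
    proof (cases "S - Q = T - Q")
      case True
      have "(\<Sum>r\<in>Pow (?X \<inter> Q). U S (r \<union> (S - Q)) * V (r \<union> (S - Q)) T) = (\<Sum>r\<in>Pow (?X \<inter> Q). U (S \<inter> Q) r * V r (T \<inter> Q))"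
      proof (rule sum.cong[OF refl])
        fix r assume r: "r \<in> Pow (?X \<inter> Q)"
        have rS: "r \<union> (S - Q) \<in> Pow ?X" using r S by auto
        have f: "r \<union> (S - Q) - Q = S - Q" "(r \<union> (S - Q)) \<inter> Q = r" using r by auto
        have "U S (r \<union> (S - Q)) = U (S \<inter> Q) r"
          using loc_entry[OF U S rS] f by simp
        moreover have "V (r \<union> (S - Q)) T = V r (T \<inter> Q)"
          using loc_entry[OF V rS T] f True by simp
        ultimately show "U S (r \<union> (S - Q)) * V (r \<union> (S - Q)) T = U (S \<inter> Q) r * V r (T \<inter> Q)" by simp
      qed
      then show ?thesis using True by simp
    next
      case False
      have "U S (r \<union> (S - Q)) * V (r \<union> (S - Q)) T = 0" if r: "r \<in> Pow (?X \<inter> Q)" for r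
      proof -
        have rS: "r \<union> (S - Q) \<in> Pow ?X" using r S by auto
        have "r \<union> (S - Q) - Q \<noteq> T - Q" using False r by auto
        then show ?thesis using loc_entry[OF V rS T] by simp
      qed
      then have "(\<Sum>r\<in>Pow (?X \<inter> Q). U S (r \<union> (S - Q)) * V (r \<union> (S - Q)) T) = 0"
        by (intro sum.neutral) blast
      then show ?thesis using False by simp
    qed
    finally show "mmult n U V S T = (if S - Q = T - Q then \<Sum>r\<in>Pow (?X \<inter> Q). U (S \<inter> Q) r * V r (T \<inter> Q) else 0)" .
  qed
qed

lemma loc_pair_eval:
  assumes U: "loc n Q U" and V: "loc n Q' V" and d: "Q \<inter> Q' = {}"
    and S: "S \<in> Pow {..<n}" and T: "T \<in> Pow {..<n}"
  shows "mmult n U V S T = (if S - (Q \<union> Q') = T - (Q \<union> Q')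
            then U (S \<inter> Q) (T \<inter> Q) * V (S \<inter> Q') (T \<inter> Q') else 0)"
proof -
  define R0 where "R0 = (T \<inter> Q) \<union> (S - Q)"
  have R0: "R0 \<in> Pow {..<n}" using S T by (auto simp: R0_def)
  have "mmult n U V S T = U S R0 * V R0 T"
    unfolding mmult_def
  proof (rule sum_single)
    fix R assume R: "R \<in> Pow {..<n}" "R \<noteq> R0"
    show "U S R * V R T = 0"
    proof (rule ccontr)
      assume "U S R * V R T \<noteq> 0"
      then have "U S R \<noteq> 0" "V R T \<noteq> 0" by auto
      then have "S - Q = R - Q" "R - Q' = T - Q'"
        using loc_entry[OF U S R(1)] loc_entry[OF V R(1) T] by (auto split: if_splits)
      then have "R = R0" using d unfolding R0_def by blast
      then show False using R by simp
    qed
  qed (use R0 in auto)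
  also have "\<dots> = (if S - (Q \<union> Q') = T - (Q \<union> Q')
            then U (S \<inter> Q) (T \<inter> Q) * V (S \<inter> Q') (T \<inter> Q') else 0)"
  proof -
    have u: "U S R0 = U (S \<inter> Q) (T \<inter> Q)"
    proof -
      have "S - Q = R0 - Q" "R0 \<inter> Q = T \<inter> Q" unfolding R0_def by auto
      then show ?thesis using loc_entry[OF U S R0] by simp
    qed
    have e1: "R0 \<inter> Q' = S \<inter> Q'" using d unfolding R0_def by blast
    have e2: "(R0 - Q' = T - Q') \<longleftrightarrow> (S - (Q \<union> Q') = T - (Q \<union> Q'))"
      using d unfolding R0_def by blast
    show ?thesis using loc_entry[OF V R0 T] u e1 e2 by simp
  qed
  finally show ?thesis .
qed

lemma loc_comm:
  assumes U: "loc n Q U" and V: "loc n Q' V" and d: "Q \<inter> Q' = {}"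
  shows "eqm n (mmult n U V) (mmult n V U)"
  unfolding eqm_def
proof (intro ballI)
  fix S T assume S: "S \<in> Pow {..<n}" and T: "T \<in> Pow {..<n}"
  have d': "Q' \<inter> Q = {}" using d by blast
  show "mmult n U V S T = mmult n V U S T"
    using loc_pair_eval[OF U V d S T] loc_pair_eval[OF V U d' S T]
    by (simp add: Un_commute mult.commute)
qed

lemma mvec_comm:
  assumes U: "loc n Q U" and V: "loc n Q' V" and d: "Q \<inter> Q' = {}"
  shows "eqv n (mvec n U (mvec n V v)) (mvec n V (mvec n U v))"
  using mvec_cong[OF loc_comm[OF U V d] eqv_refl, of v] by (simp add: mvec_mmult)


fun Pg :: "nat \<Rightarrow> (nat \<Rightarrow> qmat) \<Rightarrow> nat \<Rightarrow> nat \<Rightarrow> qmat" where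
  "Pg n u s 0 = idm"
| "Pg n u s (Suc k) = mmult n (u (s + k)) (Pg n u s k)"

lemma Uprod_Pg: "Uprod n u t = Pg n u 0 t"
  by (induction t) auto

lemma Pg_add: "eqm n (Pg n u s (k1 + k2)) (mmult n (Pg n u (s + k1) k2) (Pg n u s k1))"
proof (induction k2)
  case 0
  then show ?case using eqm_sym[OF mmult_idm_left] by simp
next
  case (Suc k2)
  have e1: "Pg n u s (k1 + Suc k2) = mmult n (u (s + (k1 + k2))) (Pg n u s (k1 + k2))" by simp
  have e2: "eqm n (mmult n (u (s + (k1 + k2))) (Pg n u s (k1 + k2)))
      (mmult n (u (s + (k1 + k2))) (mmult n (Pg n u (s + k1) k2) (Pg n u s k1)))"
    by (rule mmult_cong[OF eqm_refl Suc.IH])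
  have e3: "mmult n (u (s + (k1 + k2))) (mmult n (Pg n u (s + k1) k2) (Pg n u s k1))
      = mmult n (Pg n u (s + k1) (Suc k2)) (Pg n u s k1)"
    by (simp only: Pg.simps mmult_assoc add.assoc)
  show ?case using e2 unfolding e1 e3 .
qed

definition fv :: "nat \<Rightarrow> (nat \<Rightarrow> qmat) \<Rightarrow> nat list \<Rightarrow> qvec \<Rightarrow> qvec" where
  "fv n u ts v = foldr (\<lambda>t w. mvec n (Uprod n u t) w) ts v"

definition opL :: "nat \<Rightarrow> (nat \<Rightarrow> qmat) \<Rightarrow> nat list \<Rightarrow> qmat" where
  "opL n u ts = foldr (\<lambda>t M. mmult n (Uprod n u t) M) ts idm"

lemma UT_fv: "UT n u F v = fv n u (sorted_list_of_set F) v"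
  by (simp add: UT_def fv_def)

lemma fv_Cons: "fv n u (t # ts) v = mvec n (Uprod n u t) (fv n u ts v)"
  by (simp add: fv_def)
lemma fv_Nil: "fv n u [] v = v"
  by (simp add: fv_def)
lemma fv_append: "fv n u (xs @ ys) v = fv n u xs (fv n u ys v)"
  by (simp add: fv_def)
lemma opL_Cons: "opL n u (t # ts) = mmult n (Uprod n u t) (opL n u ts)"
  by (simp add: opL_def)
lemma opL_Nil: "opL n u [] = idm"
  by (simp add: opL_def)

lemma fv_opL: "eqv n (fv n u ts v) (mvec n (opL n u ts) v)"
proof (induction ts)
  case Nil
  then show ?case by (simp add: fv_Nil opL_Nil eqv_sym[OF mvec_idm])
next
  case (Cons t ts)
  have "fv n u (t # ts) v = mvec n (Uprod n u t) (mvec n (opL n u ts) v)"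
    using mvec_cong2[OF Cons.IH] by (simp add: fv_Cons)
  also have "\<dots> = mvec n (opL n u (t # ts)) v" by (simp add: opL_Cons mvec_mmult)
  finally show ?case by simp
qed

locale circ =
  fixes n :: nat and u :: "nat \<Rightarrow> qmat" and c :: complex
  assumes n2: "n \<ge> 2"
    and gates: "\<forall>t < n - 1. unitary_on n (u t) \<and> acts_on_pair n (u t) t"
    and cc: "cmod c = 1"
    and lastg: "\<forall>S\<in>Pow {..<n}. \<forall>T\<in>Pow {..<n}. u (n - 1) S T = c * idm S T"
begin

lemma last_eqm: "eqm n (u (n - 1)) (smat c idm)"
  using lastg by (simp add: eqm_def smat_def)

lemma gate_uni: "t < n \<Longrightarrow> uni n (u t)"
proof (cases "t < n - 1")
  case True
  then show ?thesis using gates runit_uni unitary_on_runit by blast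
next
  case False
  assume "t < n"
  then have "t = n - 1" using False by simp
  then show ?thesis using uni_cong[OF eqm_sym[OF last_eqm] uni_smat[OF cc uni_idm]] by simp
qed

lemma acts_loc: "acts_on_pair n U t \<Longrightarrow> loc n {t, Suc t} U"
  unfolding acts_on_pair_def loc_def
proof (elim exE)
  fix w assume w: "\<forall>S\<in>Pow {..<n}. \<forall>T\<in>Pow {..<n}. U S T = (if S - {t, Suc t} = T - {t, Suc t}
                 then w (t \<in> S) (Suc t \<in> S) (t \<in> T) (Suc t \<in> T) else 0)"
  show "\<exists>w. \<forall>S\<in>Pow {..<n}. \<forall>T\<in>Pow {..<n}. U S T = (if S - {t, Suc t} = T - {t, Suc t}
            then w (S \<inter> {t, Suc t}) (T \<inter> {t, Suc t}) else 0)"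
  proof (rule exI[of _ "\<lambda>X Y. w (t \<in> X) (Suc t \<in> X) (t \<in> Y) (Suc t \<in> Y)"], intro ballI)
    fix S T assume S: "S \<in> Pow {..<n}" and T: "T \<in> Pow {..<n}"
    show "U S T = (if S - {t, Suc t} = T - {t, Suc t}
            then w (t \<in> S \<inter> {t, Suc t}) (Suc t \<in> S \<inter> {t, Suc t}) (t \<in> T \<inter> {t, Suc t}) (Suc t \<in> T \<inter> {t, Suc t}) else 0)"
      using w S T by simp
  qed
qed

lemma gate_loc: "t < n \<Longrightarrow> loc n {t, Suc t} (u t)"
proof (cases "t < n - 1")
  case True
  then show ?thesis using gates acts_loc by blast
next
  case False
  assume "t < n"
  then have "t = n - 1" using False by simp
  then show ?thesis using loc_cong[OF eqm_sym[OF last_eqm] loc_smat[OF loc_idm]] by simp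
qed

lemma Pg_loc: "s + k \<le> n \<Longrightarrow> loc n {s..s+k} (Pg n u s k)"
proof (induction k)
  case 0
  then show ?case by (simp only: Pg.simps loc_idm)
next
  case (Suc k)
  have lt: "s + k < n" using Suc.prems by simp
  have sub1: "{s + k, Suc (s + k)} \<subseteq> {s..s + Suc k}" by auto
  have sub2: "{s..s + k} \<subseteq> {s..s + Suc k}" by auto
  have g: "loc n {s..s + Suc k} (u (s + k))"
    by (rule loc_mono[OF gate_loc[OF lt] sub1])
  have p: "loc n {s..s + Suc k} (Pg n u s k)"
    by (rule loc_mono[OF Suc.IH sub2]) (use lt in simp)
  show ?case unfolding Pg.simps by (rule loc_mmult[OF g p])
qed

lemma Pg_uni: "s + k \<le> n \<Longrightarrow> uni n (Pg n u s k)"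
proof (induction k)
  case 0
  then show ?case by (simp add: uni_idm)
next
  case (Suc k)
  have g: "uni n (u (s + k))" by (rule gate_uni) (use Suc.prems in auto)
  have p: "uni n (Pg n u s k)" using Suc by auto
  show ?case unfolding Pg.simps by (rule uni_mmult[OF g p])
qed

lemma Uprod_loc: "t < m \<Longrightarrow> m \<le> n \<Longrightarrow> loc n {..<m} (Uprod n u t)"
  unfolding Uprod_Pg by (rule loc_mono[OF Pg_loc]) auto

lemma Uprod_uni: "t \<le> n \<Longrightarrow> uni n (Uprod n u t)"
  unfolding Uprod_Pg by (rule Pg_uni) auto

lemma opL_loc: "(\<forall>t\<in>set ts. t < m) \<Longrightarrow> m \<le> n \<Longrightarrow> loc n {..<m} (opL n u ts)"
proof (induction ts)
  case (Cons t ts)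
  then show ?case unfolding opL_Cons by (intro loc_mmult Uprod_loc) auto
qed (simp add: opL_Nil loc_idm)

lemma opL_uni: "(\<forall>t\<in>set ts. t \<le> n) \<Longrightarrow> uni n (opL n u ts)"
proof (induction ts)
  case (Cons t ts)
  then show ?case unfolding opL_Cons by (intro uni_mmult Uprod_uni) auto
qed (simp add: opL_Nil uni_idm)

end

lemma loc_restrict: "loc n Q U \<Longrightarrow> loc n (Q \<inter> {..<n}) U"
  unfolding loc_def
proof (elim exE)
  fix w assume w: "\<forall>S\<in>Pow {..<n}. \<forall>T\<in>Pow {..<n}. U S T = (if S - Q = T - Q then w (S \<inter> Q) (T \<inter> Q) else 0)"
  show "\<exists>w. \<forall>S\<in>Pow {..<n}. \<forall>T\<in>Pow {..<n}. U S T = (if S - Q \<inter> {..<n} = T - Q \<inter> {..<n} then w (S \<inter> (Q \<inter> {..<n})) (T \<inter> (Q \<inter> {..<n})) else 0)"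
  proof (rule exI[of _ w], intro ballI)
    fix S T assume S: "S \<in> Pow {..<n}" and T: "T \<in> Pow {..<n}"
    have "S - Q \<inter> {..<n} = S - Q" "T - Q \<inter> {..<n} = T - Q" "S \<inter> (Q \<inter> {..<n}) = S \<inter> Q" "T \<inter> (Q \<inter> {..<n}) = T \<inter> Q"
      using S T by auto
    then show "U S T = (if S - Q \<inter> {..<n} = T - Q \<inter> {..<n} then w (S \<inter> (Q \<inter> {..<n})) (T \<inter> (Q \<inter> {..<n})) else 0)"
      using w S T by simp
  qed
qed

lemma cancel_l: "cunit n Z \<Longrightarrow> eqm n (mmult n (adj Z) (mmult n Z X)) X"
proof -
  assume z: "cunit n Z"
  have "eqm n (mmult n (mmult n (adj Z) Z) X) (mmult n idm X)"
    using z unfolding cunit_def by (intro mmult_cong eqm_refl)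
  then have "eqm n (mmult n (adj Z) (mmult n Z X)) (mmult n idm X)" by (simp only: mmult_assoc)
  then show ?thesis using mmult_idm_left eqm_trans by blast
qed

lemma cancel_r: "runit n Z \<Longrightarrow> eqm n (mmult n Z (mmult n (adj Z) X)) X"
proof -
  assume z: "runit n Z"
  have "eqm n (mmult n (mmult n Z (adj Z)) X) (mmult n idm X)"
    using z unfolding runit_def by (intro mmult_cong eqm_refl)
  then have "eqm n (mmult n Z (mmult n (adj Z) X)) (mmult n idm X)" by (simp only: mmult_assoc)
  then show ?thesis using mmult_idm_left eqm_trans by blast
qed

lemma fv_cong: "eqv n v v' \<Longrightarrow> eqv n (fv n u ts v) (fv n u ts v')"
proof -
  assume e: "eqv n v v'"
  have "eqv n (fv n u ts v) (mvec n (opL n u ts) v)" by (rule fv_opL)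
  also have "mvec n (opL n u ts) v = mvec n (opL n u ts) v'" by (rule mvec_cong2[OF e])
  also have "eqv n (mvec n (opL n u ts) v') (fv n u ts v')" by (rule eqv_sym[OF fv_opL])
  finally show ?thesis .
qed

context circ begin

lemma keyR:
  assumes qr: "q \<le> r" and rn: "r < n" and W: "loc n {Suc r..<n} W"
  shows "eqm n (mmult n (Uprod n u r) W)
           (mmult n (mmult n W (adj (Pg n u r (n - r)))) (Uprod n u n))"
proof -
  define H where "H = Pg n u 0 q"
  define K where "K = Pg n u q (n - q)"
  define Y where "Y = Pg n u q (r - q)"
  define Z where "Z = Pg n u r (n - r)"
  define P where "P = Pg n u 0 r"
  define T0 where "T0 = Pg n u 0 n"
  have f1: "eqm n T0 (mmult n Z P)"
    using Pg_add[of n u 0 r "n - r"] rn by (simp add: T0_def Z_def P_def)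
  have f2: "eqm n T0 (mmult n K H)"
    using Pg_add[of n u 0 q "n - q"] qr rn by (simp add: T0_def K_def H_def)
  have f3: "eqm n K (mmult n Z Y)"
    using Pg_add[of n u q "r - q" "n - r"] qr rn by (simp add: K_def Z_def Y_def)
  have uZ: "uni n Z" unfolding Z_def by (rule Pg_uni) (use rn in simp)
  have uK: "uni n K" unfolding K_def by (rule Pg_uni) (use qr rn in simp)
  have uY: "uni n Y" unfolding Y_def by (rule Pg_uni) (use qr rn in simp)
  have lH: "loc n {0..q} H" unfolding H_def using Pg_loc[of 0 q] qr rn by simp
  have lY: "loc n {q..r} Y" unfolding Y_def using Pg_loc[of q "r - q"] qr rn by simp
  have d1: "{0..q} \<inter> {Suc r..<n} = {}" using qr by auto
  have d2: "{q..r} \<inter> {Suc r..<n} = {}" by auto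
  have "eqm n (mmult n P W) (mmult n (mmult n (adj Z) (mmult n Z P)) W)"
    using uZ unfolding uni_def by (intro mmult_cong eqm_sym[OF cancel_l] eqm_refl) auto
  also have "eqm n \<dots> (mmult n (mmult n (adj Z) T0) W)"
    by (intro mmult_cong eqm_sym[OF f1] eqm_refl)
  also have "eqm n \<dots> (mmult n (mmult n (adj Z) (mmult n K H)) W)"
    by (intro mmult_cong f2 eqm_refl)
  also have "eqm n \<dots> (mmult n (adj Z) (mmult n K (mmult n H W)))"
    by (simp only: mmult_assoc eqm_refl)
  also have "eqm n \<dots> (mmult n (adj Z) (mmult n K (mmult n W H)))"
    by (rule mmult_cong[OF eqm_refl mmult_cong[OF eqm_refl loc_comm[OF lH W d1]]])
  also have "eqm n \<dots> (mmult n (adj Z) (mmult n K (mmult n W (mmult n (adj K) (mmult n K H)))))"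
    using uK unfolding uni_def
    by (intro mmult_cong[OF eqm_refl mmult_cong[OF eqm_refl mmult_cong[OF eqm_refl]]] eqm_sym[OF cancel_l]) auto
  also have "eqm n \<dots> (mmult n (adj Z) (mmult n K (mmult n W (mmult n (adj K) T0))))"
    by (intro mmult_cong[OF eqm_refl mmult_cong[OF eqm_refl mmult_cong[OF eqm_refl mmult_cong[OF eqm_refl]]]] eqm_sym[OF f2])
  also have "eqm n \<dots> (mmult n (adj Z) (mmult n (mmult n Z Y) (mmult n W (mmult n (adj (mmult n Z Y)) T0))))"
    by (intro mmult_cong[OF eqm_refl mmult_cong[OF f3 mmult_cong[OF eqm_refl mmult_cong[OF adj_cong[OF f3] eqm_refl]]]])
  also have "eqm n \<dots> (mmult n (adj Z) (mmult n Z (mmult n Y (mmult n W (mmult n (adj Y) (mmult n (adj Z) T0))))))"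
    by (simp only: mmult_assoc adj_mmult eqm_refl)
  also have "eqm n \<dots> (mmult n Y (mmult n W (mmult n (adj Y) (mmult n (adj Z) T0))))"
    using uZ unfolding uni_def by (intro cancel_l) auto
  also have "eqm n \<dots> (mmult n (mmult n Y W) (mmult n (adj Y) (mmult n (adj Z) T0)))"
    by (simp only: mmult_assoc eqm_refl)
  also have "eqm n \<dots> (mmult n (mmult n W Y) (mmult n (adj Y) (mmult n (adj Z) T0)))"
    by (rule mmult_cong[OF loc_comm[OF lY W d2] eqm_refl])
  also have "eqm n \<dots> (mmult n W (mmult n Y (mmult n (adj Y) (mmult n (adj Z) T0))))"
    by (simp only: mmult_assoc eqm_refl)
  also have "eqm n \<dots> (mmult n W (mmult n (adj Z) T0))"
    using uY unfolding uni_def by (intro mmult_cong[OF eqm_refl] cancel_r) auto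
  also have "eqm n \<dots> (mmult n (mmult n W (adj Z)) T0)"
    by (simp only: mmult_assoc eqm_refl)
  finally show ?thesis by (simp add: P_def Z_def T0_def Uprod_Pg)
qed

end

lemma sorted_split3:
  fixes F :: "nat set"
  assumes "F \<subseteq> {..<n}" "p \<le> q"
  shows "sorted_list_of_set F = sorted_list_of_set (F \<inter> {..<p}) @ sorted_list_of_set (F \<inter> {p..<q}) @ sorted_list_of_set (F \<inter> {q..<n})"
proof -
  have fin: "finite F" by (rule finite_subset[OF assms(1)]) simp
  define L where "L = sorted_list_of_set (F \<inter> {..<p})"
  define X where "X = sorted_list_of_set (F \<inter> {p..<q})"
  define R where "R = sorted_list_of_set (F \<inter> {q..<n})"
  have sL: "set L = F \<inter> {..<p}" and sX: "set X = F \<inter> {p..<q}" and sR: "set R = F \<inter> {q..<n}"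
    using fin by (simp_all add: L_def X_def R_def)
  have so: "sorted L" "sorted X" "sorted R" by (simp_all add: L_def X_def R_def)
  have di: "distinct L" "distinct X" "distinct R" by (simp_all add: L_def X_def R_def)
  have o1: "\<forall>x\<in>set X. \<forall>y\<in>set R. x \<le> y" unfolding sX sR by auto
  have o2: "\<forall>x\<in>set L. \<forall>y\<in>set (X @ R). x \<le> y" unfolding set_append sL sX sR using assms(2) by auto
  have s1: "sorted (X @ R)" using so o1 by (simp add: sorted_append)
  have s2: "sorted (L @ X @ R)" using so s1 o2 by (simp add: sorted_append)
  have d0: "set X \<inter> set R = {}" "set L \<inter> set (X @ R) = {}"
    unfolding set_append sL sX sR using assms(2) by auto
  have d1: "distinct (X @ R)" using di d0 by (simp add: distinct_append)
  have d2: "distinct (L @ X @ R)" using di d1 d0 by (simp add: distinct_append)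
  have st: "set (L @ X @ R) = F" unfolding set_append sL sX sR using assms by auto
  have "sorted_list_of_set F = L @ X @ R"
    by (rule sorted_distinct_set_unique) (use fin s2 d2 st in auto)
  then show ?thesis by (simp add: L_def X_def R_def)
qed

locale circphi = circ +
  fixes phi :: qvec and lam :: complex
  assumes lam1: "cmod lam = 1"
    and eig: "eqv n (mvec n (Uprod n u n) phi) (\<lambda>S. lam * phi S)"
begin

lemma claimR:
  assumes q: "q \<le> n"
  shows "sorted_wrt (<) rs \<Longrightarrow> (\<forall>r\<in>set rs. q \<le> r \<and> r < n) \<Longrightarrow> (\<forall>r\<in>set rs. m \<le> r) \<Longrightarrow>
    \<exists>W. uni n W \<and> loc n {m..<n} W \<and> eqv n (fv n u rs phi) (mvec n W phi)"
proof (induction rs arbitrary: m)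
  case Nil
  show ?case
    by (rule exI[of _ idm]) (simp add: uni_idm loc_idm fv_Nil eqv_sym[OF mvec_idm])
next
  case (Cons r rest)
  have r: "q \<le> r" "r < n" "m \<le> r" using Cons.prems by auto
  have "\<exists>W. uni n W \<and> loc n {Suc r..<n} W \<and> eqv n (fv n u rest phi) (mvec n W phi)"
    by (rule Cons.IH) (use Cons.prems in auto)
  then obtain W where W: "uni n W" "loc n {Suc r..<n} W" "eqv n (fv n u rest phi) (mvec n W phi)"
    by blast
  define Z where "Z = Pg n u r (n - r)"
  define W' where "W' = smat lam (mmult n W (adj Z))"
  have uZ: "uni n Z" unfolding Z_def by (rule Pg_uni) (use r in simp)
  have lZ: "loc n {r..<n} Z"
  proof -
    have "loc n ({r..r + (n - r)} \<inter> {..<n}) Z" unfolding Z_def by (rule loc_restrict[OF Pg_loc]) (use r in simp)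
    moreover have "{r..r + (n - r)} \<inter> {..<n} = {r..<n}" using r by auto
    ultimately show ?thesis by simp
  qed
  have uW': "uni n W'" unfolding W'_def by (intro uni_smat lam1 uni_mmult W(1) uni_adj uZ)
  have lW': "loc n {m..<n} W'" unfolding W'_def
    by (intro loc_smat loc_mmult loc_mono[OF W(2)] loc_mono[OF loc_adj[OF lZ]]) (use r in auto)
  have "fv n u (r # rest) phi = mvec n (Uprod n u r) (fv n u rest phi)" by (simp add: fv_Cons)
  also have "\<dots> = mvec n (Uprod n u r) (mvec n W phi)" by (rule mvec_cong2[OF W(3)])
  also have "\<dots> = mvec n (mmult n (Uprod n u r) W) phi" by (simp add: mvec_mmult)
  finally have e1: "fv n u (r # rest) phi = mvec n (mmult n (Uprod n u r) W) phi" .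
  have "eqv n (mvec n (mmult n (Uprod n u r) W) phi) (mvec n (mmult n (mmult n W (adj Z)) (Uprod n u n)) phi)"
    by (rule mvec_cong[OF keyR[OF r(1) r(2) W(2)] eqv_refl, unfolded Z_def[symmetric]])
  also have "mvec n (mmult n (mmult n W (adj Z)) (Uprod n u n)) phi = mvec n (mmult n W (adj Z)) (mvec n (Uprod n u n) phi)"
    by (simp add: mvec_mmult)
  also have "\<dots> = mvec n (mmult n W (adj Z)) (\<lambda>S. lam * phi S)" by (rule mvec_cong2[OF eig])
  also have "\<dots> = mvec n W' phi"
    by (simp add: fun_eq_iff W'_def smat_mvec mvec_def sum_distrib_left mult.left_commute)
  finally have "eqv n (fv n u (r # rest) phi) (mvec n W' phi)" unfolding e1 .
  then show ?case using uW' lW' by blast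
qed

lemma claimA:
  assumes q: "q \<le> n"
  shows "sorted_wrt (<) xs \<Longrightarrow> (\<forall>x\<in>set xs. p + i \<le> x \<and> x < q) \<Longrightarrow>
    \<exists>V. uni n V \<and> loc n {p + i..<q} V \<and> eqm n (opL n u xs) (mmult n V (opL n u [p + i..<p + i + length xs]))"
proof (induction xs arbitrary: i)
  case Nil
  show ?case
    by (rule exI[of _ idm]) (simp add: uni_idm loc_idm opL_Nil eqm_sym[OF mmult_idm_left])
next
  case (Cons s rest)
  have s: "p + i \<le> s" "s < q" using Cons.prems by auto
  have "\<exists>V. uni n V \<and> loc n {p + Suc i..<q} V \<and> eqm n (opL n u rest) (mmult n V (opL n u [p + Suc i..<p + Suc i + length rest]))"
    by (rule Cons.IH) (use Cons.prems in auto)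
  then obtain V' where V': "uni n V'" "loc n {p + Suc i..<q} V'"
    "eqm n (opL n u rest) (mmult n V' (opL n u [p + Suc i..<p + Suc i + length rest]))" by blast
  define O' where "O' = opL n u [p + Suc i..<p + Suc i + length rest]"
  define E where "E = Pg n u (p + i) (s - (p + i))"
  define U0 where "U0 = Uprod n u (p + i)"
  have uE: "uni n E" unfolding E_def by (rule Pg_uni) (use s q in simp)
  have lE: "loc n {p + i..<q} E"
    unfolding E_def by (rule loc_mono[OF Pg_loc]) (use s q in auto)
  have lU0: "loc n {..<Suc (p + i)} U0" unfolding U0_def by (rule Uprod_loc) (use s q in auto)
  have d: "{..<Suc (p + i)} \<inter> {p + Suc i..<q} = {}" by auto
  have fE: "eqm n (Uprod n u s) (mmult n E U0)"
    using Pg_add[of n u 0 "p + i" "s - (p + i)"] s unfolding E_def U0_def Uprod_Pg by simp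
  have "eqm n (opL n u (s # rest)) (mmult n (Uprod n u s) (mmult n V' O'))"
    unfolding opL_Cons O'_def by (rule mmult_cong[OF eqm_refl V'(3)])
  also have "eqm n \<dots> (mmult n (mmult n E U0) (mmult n V' O'))"
    by (rule mmult_cong[OF fE eqm_refl])
  also have "eqm n \<dots> (mmult n E (mmult n (mmult n U0 V') O'))"
    by (simp only: mmult_assoc eqm_refl)
  also have "eqm n \<dots> (mmult n E (mmult n (mmult n V' U0) O'))"
    by (rule mmult_cong[OF eqm_refl mmult_cong[OF loc_comm[OF lU0 V'(2) d] eqm_refl]])
  also have "eqm n \<dots> (mmult n (mmult n E V') (mmult n U0 O'))"
    by (simp only: mmult_assoc eqm_refl)
  also have "eqm n \<dots> (mmult n (mmult n E V') (opL n u [p + i..<p + i + length (s # rest)]))"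
  proof -
    have "[p + i..<p + i + length (s # rest)] = (p + i) # [p + Suc i..<p + Suc i + length rest]"
      by (subst upt_conv_Cons) (simp_all add: add.commute add.left_commute)
    then have "mmult n U0 O' = opL n u [p + i..<p + i + length (s # rest)]"
      by (simp add: U0_def O'_def opL_Cons)
    then show ?thesis by simp
  qed
  finally have "eqm n (opL n u (s # rest)) (mmult n (mmult n E V') (opL n u [p + i..<p + i + length (s # rest)]))" .
  moreover have "uni n (mmult n E V')" by (rule uni_mmult[OF uE V'(1)])
  moreover have "loc n {p + i..<q} (mmult n E V')"
    by (rule loc_mmult[OF lE loc_mono[OF V'(2)]]) auto
  ultimately show ?case by blast
qed

end

context circphi begin

lemma decomp:
  assumes pq: "p \<le> q" "q \<le> n"
  shows "\<exists>Vf Wf. (\<forall>x\<in>Pow {p..<q}. uni n (Vf x) \<and> loc n {p..<q} (Vf x)) \<and>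
     (\<forall>y\<in>Pow ({..<n} - {p..<q}). uni n (Wf y) \<and> loc n ({..<n} - {p..<q}) (Wf y)) \<and>
     (\<forall>F\<in>Pow {..<n}. eqv n (UT n u F phi)
        (mvec n (Vf (F \<inter> {p..<q})) (mvec n (Wf (F - {p..<q})) (UT n u {p..<p + card (F \<inter> {p..<q})} phi))))"
proof -
  define A where "A = {p..<q}"
  define B where "B = {..<n} - {p..<q}"
  define PV where "PV = (\<lambda>x V. uni n V \<and> loc n A V \<and>
      eqm n (opL n u (sorted_list_of_set x)) (mmult n V (opL n u [p..<p + card x])))"
  define PW where "PW = (\<lambda>y W. uni n W \<and> loc n B W \<and> (\<exists>WR. loc n {q..<n} WR \<and>
      eqv n (fv n u (sorted_list_of_set (y \<inter> {q..<n})) phi) (mvec n WR phi) \<and>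
      W = mmult n (opL n u (sorted_list_of_set (y \<inter> {..<p}))) WR))"
  have exV: "\<forall>x\<in>Pow A. \<exists>V. PV x V"
  proof
    fix x assume x: "x \<in> Pow A"
    have fx: "finite x" by (rule finite_subset[of x "{p..<q}"]) (use x in \<open>simp_all add: A_def\<close>)
    have "\<exists>V. uni n V \<and> loc n {p + 0..<q} V \<and> eqm n (opL n u (sorted_list_of_set x))
        (mmult n V (opL n u [p + 0..<p + 0 + length (sorted_list_of_set x)]))"
      by (rule claimA[OF pq(2)]) (use x fx in \<open>auto simp: A_def\<close>)
    then show "\<exists>V. PV x V" using fx by (simp add: PV_def A_def)
  qed
  have exW: "\<forall>y\<in>Pow B. \<exists>W. PW y W"
  proof
    fix y assume y: "y \<in> Pow B"
    have "\<exists>W. uni n W \<and> loc n {q..<n} W \<and> eqv n (fv n u (sorted_list_of_set (y \<inter> {q..<n})) phi) (mvec n W phi)"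
      by (rule claimR[OF pq(2)]) auto
    then obtain WR where WR: "uni n WR" "loc n {q..<n} WR"
      "eqv n (fv n u (sorted_list_of_set (y \<inter> {q..<n})) phi) (mvec n WR phi)" by blast
    define W where "W = mmult n (opL n u (sorted_list_of_set (y \<inter> {..<p}))) WR"
    have "uni n W" unfolding W_def by (intro uni_mmult opL_uni WR(1)) (use pq in auto)
    moreover have "loc n B W" unfolding W_def B_def
      by (intro loc_mmult loc_mono[OF opL_loc[of _ p]] loc_mono[OF WR(2)]) (use pq in auto)
    ultimately have "PW y W" unfolding PW_def using WR W_def by blast
    then show "\<exists>W. PW y W" by blast
  qed
  obtain Vf where Vf: "\<forall>x\<in>Pow A. PV x (Vf x)" using bchoice[OF exV] by blast
  obtain Wf where Wf: "\<forall>y\<in>Pow B. PW y (Wf y)" using bchoice[OF exW] by blast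
  have main: "eqv n (UT n u F phi) (mvec n (Vf (F \<inter> A)) (mvec n (Wf (F - A)) (UT n u {p..<p + card (F \<inter> A)} phi)))"
    if F: "F \<in> Pow {..<n}" for F
  proof -
    define x where "x = F \<inter> A"
    define y where "y = F - A"
    have xA: "x \<in> Pow A" and yB: "y \<in> Pow B" using F by (auto simp: x_def y_def A_def B_def)
    have yL: "y \<inter> {..<p} = F \<inter> {..<p}" and yR: "y \<inter> {q..<n} = F \<inter> {q..<n}"
      using F by (auto simp: y_def A_def)
    define L where "L = sorted_list_of_set (F \<inter> {..<p})"
    define X where "X = sorted_list_of_set x"
    define R where "R = sorted_list_of_set (F \<inter> {q..<n})"
    define V where "V = Vf x"
    define OT where "OT = opL n u [p..<p + card x]"
    have PVx: "uni n V" "loc n A V" "eqm n (opL n u X) (mmult n V OT)"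
      using Vf xA unfolding PV_def V_def X_def OT_def by auto
    have "PW y (Wf y)" using Wf yB by blast
    from this[unfolded PW_def yL yR] obtain WR where WR: "loc n {q..<n} WR" "eqv n (fv n u R phi) (mvec n WR phi)"
      "Wf y = mmult n (opL n u L) WR"
      unfolding R_def L_def by blast
    have split: "sorted_list_of_set F = L @ X @ R"
      unfolding L_def X_def R_def x_def A_def using sorted_split3[of F n p q] F pq by auto
    have lX: "loc n {..<q} (opL n u X)"
      by (rule opL_loc) (use pq xA in \<open>auto simp: X_def A_def x_def\<close>)
    have lL: "loc n {..<p} (opL n u L)"
      by (rule opL_loc) (use pq F in \<open>auto simp: L_def\<close>)
    have lV: "loc n {p..<q} V" using PVx(2) by (simp add: A_def)
    have d1: "{..<q} \<inter> {q..<n} = {}" "{q..<n} \<inter> {p..<q} = {}" "{..<p} \<inter> {p..<q} = {}" by auto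
    have "eqv n (UT n u F phi) (fv n u L (fv n u X (fv n u R phi)))"
      by (simp add: UT_fv split fv_append)
    also have "eqv n \<dots> (fv n u L (fv n u X (mvec n WR phi)))"
      by (intro fv_cong WR(2))
    also have "eqv n \<dots> (mvec n (opL n u L) (fv n u X (mvec n WR phi)))"
      by (rule fv_opL)
    also have "eqv n \<dots> (mvec n (opL n u L) (mvec n (opL n u X) (mvec n WR phi)))"
      by (rule mvec_cong[OF eqm_refl fv_opL])
    also have "eqv n \<dots> (mvec n (opL n u L) (mvec n WR (mvec n (opL n u X) phi)))"
      by (rule mvec_cong[OF eqm_refl mvec_comm[OF lX WR(1) d1(1)]])
    also have "eqv n \<dots> (mvec n (opL n u L) (mvec n WR (mvec n V (mvec n OT phi))))"
      by (rule mvec_cong[OF eqm_refl mvec_cong[OF eqm_refl]])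
         (use mvec_cong[OF PVx(3) eqv_refl, of phi] in \<open>simp add: mvec_mmult\<close>)
    also have "eqv n \<dots> (mvec n (opL n u L) (mvec n V (mvec n WR (mvec n OT phi))))"
      by (rule mvec_cong[OF eqm_refl mvec_comm[OF WR(1) lV d1(2)]])
    also have "eqv n \<dots> (mvec n V (mvec n (opL n u L) (mvec n WR (mvec n OT phi))))"
      by (rule mvec_comm[OF lL lV d1(3)])
    also have "eqv n (mvec n V (mvec n (opL n u L) (mvec n WR (mvec n OT phi)))) (mvec n V (mvec n (Wf y) (mvec n OT phi)))"
      by (simp add: WR(3) mvec_mmult)
    also have "eqv n \<dots> (mvec n V (mvec n (Wf y) (UT n u {p..<p + card x} phi)))"
    proof -
      have "eqv n (mvec n OT phi) (UT n u {p..<p + card x} phi)"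
        unfolding OT_def UT_fv by (simp add: eqv_sym[OF fv_opL])
      then show ?thesis by (simp add: mvec_cong2)
    qed
    finally show ?thesis by (simp add: V_def x_def y_def)
  qed
  show ?thesis
    by (rule exI[of _ Vf], rule exI[of _ Wf]) (use Vf Wf main in \<open>auto simp: PV_def PW_def A_def B_def\<close>)
qed

end

lemma of_real_sum_sq: "complex_of_real (\<Sum>a\<in>D. (cmod (f a))\<^sup>2) = (\<Sum>a\<in>D. f a * cnj (f a))"
  unfolding of_real_sum complex_norm_square ..

lemma unorm:
  assumes D: "finite D"
    and U: "\<forall>r\<in>D. \<forall>r'\<in>D. (\<Sum>a\<in>D. cnj (M a r) * M a r') = idm r r'"
  shows "(\<Sum>a\<in>D. (cmod (\<Sum>r\<in>D. M a r * x r))\<^sup>2) = (\<Sum>r\<in>D. (cmod (x r))\<^sup>2)"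
proof -
  have U': "(\<Sum>a\<in>D. M a r * cnj (M a r')) = idm r r'" if "r \<in> D" "r' \<in> D" for r r'
  proof -
    have "(\<Sum>a\<in>D. M a r * cnj (M a r')) = cnj (\<Sum>a\<in>D. cnj (M a r) * M a r')"
      by (simp add: mult.commute)
    also have "\<dots> = idm r r'" using U that by (simp add: idm_def)
    finally show ?thesis .
  qed
  have "complex_of_real (\<Sum>a\<in>D. (cmod (\<Sum>r\<in>D. M a r * x r))\<^sup>2)
      = (\<Sum>a\<in>D. (\<Sum>r\<in>D. M a r * x r) * cnj (\<Sum>r'\<in>D. M a r' * x r'))"
    by (rule of_real_sum_sq)
  also have "\<dots> = (\<Sum>a\<in>D. \<Sum>r\<in>D. \<Sum>r'\<in>D. (M a r * x r) * (cnj (M a r') * cnj (x r')))"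
    by (simp only: cnj_sum complex_cnj_mult sum_product)
  also have "\<dots> = (\<Sum>a\<in>D. \<Sum>r\<in>D. \<Sum>r'\<in>D. (M a r * cnj (M a r')) * (x r * cnj (x r')))"
    by (simp add: mult_ac)
  also have "\<dots> = (\<Sum>r\<in>D. \<Sum>a\<in>D. \<Sum>r'\<in>D. (M a r * cnj (M a r')) * (x r * cnj (x r')))"
    by (rule sum.swap)
  also have "\<dots> = (\<Sum>r\<in>D. \<Sum>r'\<in>D. \<Sum>a\<in>D. (M a r * cnj (M a r')) * (x r * cnj (x r')))"
    by (rule sum.cong[OF refl], rule sum.swap)
  also have "\<dots> = (\<Sum>r\<in>D. \<Sum>r'\<in>D. (\<Sum>a\<in>D. M a r * cnj (M a r')) * (x r * cnj (x r')))"
    by (simp add: sum_distrib_right)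
  also have "\<dots> = (\<Sum>r\<in>D. \<Sum>r'\<in>D. idm r r' * (x r * cnj (x r')))"
    by (intro sum.cong refl) (simp add: U')
  also have "\<dots> = (\<Sum>r\<in>D. x r * cnj (x r))"
    using D by (simp add: idm_def sum_ifl)
  also have "\<dots> = complex_of_real (\<Sum>r\<in>D. (cmod (x r))\<^sup>2)"
    by (rule of_real_sum_sq[symmetric])
  finally show ?thesis by (simp only: of_real_eq_iff)
qed

definition rho :: "nat \<Rightarrow> nat set \<Rightarrow> qvec \<Rightarrow> qvec \<Rightarrow> nat set \<Rightarrow> nat set \<Rightarrow> complex" where
  "rho n A p1 p2 a a' = (\<Sum>b\<in>Pow ({..<n} - A). p1 (a \<union> b) * cnj (p2 (a' \<union> b)))"

definition rhoJ :: "nat \<Rightarrow> nat set \<Rightarrow> (nat set \<Rightarrow> nat set \<Rightarrow> complex) \<Rightarrow> nat set \<Rightarrow> nat set \<Rightarrow> nat set \<Rightarrow> nat set \<Rightarrow> complex" where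
  "rhoJ n A P aq af aq' af' = (\<Sum>bq\<in>Pow ({..<n} - A). \<Sum>bf\<in>Pow ({..<n} - A).
      P (aq \<union> bq) (af \<union> bf) * cnj (P (aq' \<union> bq) (af' \<union> bf)))"

lemma rho_cnj: "rho n A p p a' a = cnj (rho n A p p a a')"
  by (simp add: rho_def mult.commute)

lemma rhoJ_cnj: "rhoJ n A P aq' af' aq af = cnj (rhoJ n A P aq af aq' af')"
  by (simp add: rhoJ_def mult.commute)

lemma purity_rho: "purity n A p = (\<Sum>a\<in>Pow A. \<Sum>a'\<in>Pow A. (cmod (rho n A p p a a'))\<^sup>2)"
proof -
  have inner: "(\<Sum>b\<in>Pow ({..<n} - A). \<Sum>b'\<in>Pow ({..<n} - A).
      p (a \<union> b) * cnj (p (a' \<union> b)) * p (a' \<union> b') * cnj (p (a \<union> b')))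
      = complex_of_real ((cmod (rho n A p p a a'))\<^sup>2)" for a a'
  proof -
    have "(\<Sum>b\<in>Pow ({..<n} - A). \<Sum>b'\<in>Pow ({..<n} - A).
      p (a \<union> b) * cnj (p (a' \<union> b)) * p (a' \<union> b') * cnj (p (a \<union> b')))
      = rho n A p p a a' * rho n A p p a' a"
      unfolding rho_def sum_product by (intro sum.cong refl) (simp only: mult.assoc)
    also have "\<dots> = rho n A p p a a' * cnj (rho n A p p a a')" by (simp only: rho_cnj[of n A p a' a])
    also have "\<dots> = complex_of_real ((cmod (rho n A p p a a'))\<^sup>2)" by (rule complex_norm_square[symmetric])
    finally show ?thesis .
  qed
  show ?thesis unfolding purity_def inner by (simp flip: of_real_sum)
qed

lemma purityJ_rho: "purity_joint n A P = (\<Sum>aq\<in>Pow A. \<Sum>af\<in>Pow A. \<Sum>aq'\<in>Pow A. \<Sum>af'\<in>Pow A.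
    (cmod (rhoJ n A P aq af aq' af'))\<^sup>2)"
proof -
  have inner: "(\<Sum>bq\<in>Pow ({..<n} - A). \<Sum>bf\<in>Pow ({..<n} - A).
     \<Sum>bq'\<in>Pow ({..<n} - A). \<Sum>bf'\<in>Pow ({..<n} - A).
       P (aq \<union> bq) (af \<union> bf) * cnj (P (aq' \<union> bq) (af' \<union> bf))
     * P (aq' \<union> bq') (af' \<union> bf') * cnj (P (aq \<union> bq') (af \<union> bf')))
      = complex_of_real ((cmod (rhoJ n A P aq af aq' af'))\<^sup>2)" for aq af aq' af'
  proof -
    have "(\<Sum>bq\<in>Pow ({..<n} - A). \<Sum>bf\<in>Pow ({..<n} - A).
     \<Sum>bq'\<in>Pow ({..<n} - A). \<Sum>bf'\<in>Pow ({..<n} - A).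
       P (aq \<union> bq) (af \<union> bf) * cnj (P (aq' \<union> bq) (af' \<union> bf))
     * P (aq' \<union> bq') (af' \<union> bf') * cnj (P (aq \<union> bq') (af \<union> bf')))
      = rhoJ n A P aq af aq' af' * rhoJ n A P aq' af' aq af"
      unfolding rhoJ_def by (simp only: sum_distrib_right) (simp only: sum_distrib_left mult.assoc)
    also have "\<dots> = rhoJ n A P aq af aq' af' * cnj (rhoJ n A P aq af aq' af')" by (simp only: rhoJ_cnj[of n A P aq' af' aq af])
    also have "\<dots> = complex_of_real ((cmod (rhoJ n A P aq af aq' af'))\<^sup>2)" by (rule complex_norm_square[symmetric])
    finally show ?thesis .
  qed
  show ?thesis unfolding purity_joint_def inner by (simp flip: of_real_sum)
qed


lemma sum_swap3: "(\<Sum>a\<in>X. \<Sum>b\<in>Y. \<Sum>c\<in>Z. f a b c) = (\<Sum>b\<in>Y. \<Sum>c\<in>Z. \<Sum>a\<in>X. f a b c)"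
proof -
  have "(\<Sum>a\<in>X. \<Sum>b\<in>Y. \<Sum>c\<in>Z. f a b c) = (\<Sum>b\<in>Y. \<Sum>a\<in>X. \<Sum>c\<in>Z. f a b c)"
    by (rule sum.swap)
  also have "\<dots> = (\<Sum>b\<in>Y. \<Sum>c\<in>Z. \<Sum>a\<in>X. f a b c)"
    by (rule sum.cong[OF refl], rule sum.swap)
  finally show ?thesis .
qed

lemma split_pow:
  assumes "A \<subseteq> {..<n::nat}"
  shows "(\<Sum>R\<in>Pow {..<n}. f R) = (\<Sum>a\<in>Pow A. \<Sum>b\<in>Pow ({..<n} - A). f (a \<union> b))"
proof -
  have "{..<n} \<inter> A = A" using assms by auto
  then show ?thesis using sum_split[of "{..<n}" f A] by simp
qed

lemma locA_entry:
  assumes V: "loc n A V" and A: "A \<subseteq> {..<n}"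
    and a: "a \<in> Pow A" and r: "r \<in> Pow A" and b: "b \<in> Pow ({..<n} - A)" and b': "b' \<in> Pow ({..<n} - A)"
  shows "V (a \<union> b) (r \<union> b') = (if b = b' then V a r else 0)"
proof -
  have S: "a \<union> b \<in> Pow {..<n}" and T: "r \<union> b' \<in> Pow {..<n}" using A a r b b' by auto
  have e: "a \<union> b - A = b" "r \<union> b' - A = b'" "(a \<union> b) \<inter> A = a" "(r \<union> b') \<inter> A = r"
    using a r b b' by auto
  have "V (a \<union> b) (r \<union> b') = (if a \<union> b - A = r \<union> b' - A then V ((a \<union> b) \<inter> A) ((r \<union> b') \<inter> A) else 0)"
    by (rule loc_entry[OF V S T])
  also have "\<dots> = (if b = b' then V a r else 0)" by (simp only: e)
  finally show ?thesis .
qed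

lemma locB_entry:
  assumes W: "loc n ({..<n} - A) W" and A: "A \<subseteq> {..<n}"
    and a: "a \<in> Pow A" and a': "a' \<in> Pow A" and b: "b \<in> Pow ({..<n} - A)" and b': "b' \<in> Pow ({..<n} - A)"
  shows "W (a \<union> b) (a' \<union> b') = (if a = a' then W b b' else 0)"
proof -
  have S: "a \<union> b \<in> Pow {..<n}" and T: "a' \<union> b' \<in> Pow {..<n}" using A a a' b b' by auto
  have e: "a \<union> b - ({..<n} - A) = a" "a' \<union> b' - ({..<n} - A) = a'"
    "(a \<union> b) \<inter> ({..<n} - A) = b" "(a' \<union> b') \<inter> ({..<n} - A) = b'"
    using a a' b b' A by auto
  have "W (a \<union> b) (a' \<union> b') = (if a \<union> b - ({..<n} - A) = a' \<union> b' - ({..<n} - A)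
      then W ((a \<union> b) \<inter> ({..<n} - A)) ((a' \<union> b') \<inter> ({..<n} - A)) else 0)"
    by (rule loc_entry[OF W S T])
  also have "\<dots> = (if a = a' then W b b' else 0)" by (simp only: e)
  finally show ?thesis .
qed

lemma locA_apply:
  assumes V: "loc n A V" and A: "A \<subseteq> {..<n}" and a: "a \<in> Pow A" and b: "b \<in> Pow ({..<n} - A)"
  shows "mvec n V p (a \<union> b) = (\<Sum>r\<in>Pow A. V a r * p (r \<union> b))"
proof -
  have "mvec n V p (a \<union> b) = (\<Sum>r\<in>Pow A. \<Sum>b'\<in>Pow ({..<n} - A). V (a \<union> b) (r \<union> b') * p (r \<union> b'))"
    unfolding mvec_def by (rule split_pow[OF A])
  also have "\<dots> = (\<Sum>r\<in>Pow A. V a r * p (r \<union> b))"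
  proof (rule sum.cong[OF refl])
    fix r assume r: "r \<in> Pow A"
    have "(\<Sum>b'\<in>Pow ({..<n} - A). V (a \<union> b) (r \<union> b') * p (r \<union> b')) = V (a \<union> b) (r \<union> b) * p (r \<union> b)"
      by (rule sum_single) (use locA_entry[OF V A a r b] b in auto)
    also have "\<dots> = V a r * p (r \<union> b)" using locA_entry[OF V A a r b b] by simp
    finally show "(\<Sum>b'\<in>Pow ({..<n} - A). V (a \<union> b) (r \<union> b') * p (r \<union> b')) = V a r * p (r \<union> b)" .
  qed
  finally show ?thesis .
qed

lemma locB_apply:
  assumes W: "loc n ({..<n} - A) W" and A: "A \<subseteq> {..<n}" and a: "a \<in> Pow A" and b: "b \<in> Pow ({..<n} - A)"
  shows "mvec n W p (a \<union> b) = (\<Sum>b'\<in>Pow ({..<n} - A). W b b' * p (a \<union> b'))"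
proof -
  have "mvec n W p (a \<union> b) = (\<Sum>r\<in>Pow A. \<Sum>b'\<in>Pow ({..<n} - A). W (a \<union> b) (r \<union> b') * p (r \<union> b'))"
    unfolding mvec_def by (rule split_pow[OF A])
  also have "\<dots> = (\<Sum>b'\<in>Pow ({..<n} - A). W (a \<union> b) (a \<union> b') * p (a \<union> b'))"
  proof (rule sum_single)
    fix r assume r: "r \<in> Pow A" "r \<noteq> a"
    show "(\<Sum>b'\<in>Pow ({..<n} - A). W (a \<union> b) (r \<union> b') * p (r \<union> b')) = 0"
      by (rule sum.neutral) (use locB_entry[OF W A a r(1) b] r(2) in auto)
  qed (use a finite_subset[OF A] in auto)
  also have "\<dots> = (\<Sum>b'\<in>Pow ({..<n} - A). W b b' * p (a \<union> b'))"
    by (rule sum.cong[OF refl]) (use locB_entry[OF W A a a b] in auto)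
  finally show ?thesis .
qed

lemma locA_cunit:
  assumes V: "loc n A V" and A: "A \<subseteq> {..<n}" and c: "cunit n V" and r: "r \<in> Pow A" and r': "r' \<in> Pow A"
  shows "(\<Sum>a\<in>Pow A. cnj (V a r) * V a r') = idm r r'"
proof -
  have e: "{} \<in> Pow ({..<n} - A)" by simp
  have rP: "r \<in> Pow {..<n}" "r' \<in> Pow {..<n}" using r r' A by auto
  have "idm r r' = (\<Sum>R\<in>Pow {..<n}. cnj (V R r) * V R r')"
    using c rP unfolding cunit_def eqm_def mmult_def adj_def by auto
  also have "\<dots> = (\<Sum>a\<in>Pow A. \<Sum>b\<in>Pow ({..<n} - A). cnj (V (a \<union> b) (r \<union> {})) * V (a \<union> b) (r' \<union> {}))"
    using split_pow[OF A] by simp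
  also have "\<dots> = (\<Sum>a\<in>Pow A. cnj (V (a \<union> {}) (r \<union> {})) * V (a \<union> {}) (r' \<union> {}))"
  proof (rule sum.cong[OF refl], rule sum_single)
    fix a b assume a: "a \<in> Pow A" and b: "b \<in> Pow ({..<n} - A)" "b \<noteq> {}"
    show "cnj (V (a \<union> b) (r \<union> {})) * V (a \<union> b) (r' \<union> {}) = 0"
      using locA_entry[OF V A a r b(1) e] b(2) by simp
  qed auto
  also have "\<dots> = (\<Sum>a\<in>Pow A. cnj (V a r) * V a r')" by simp
  finally show ?thesis by simp
qed

lemma locB_cunit:
  assumes W: "loc n ({..<n} - A) W" and A: "A \<subseteq> {..<n}" and c: "cunit n W"
    and s: "s \<in> Pow ({..<n} - A)" and s': "s' \<in> Pow ({..<n} - A)"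
  shows "(\<Sum>b\<in>Pow ({..<n} - A). cnj (W b s) * W b s') = idm s s'"
proof -
  have e: "{} \<in> Pow A" by simp
  have sP: "s \<in> Pow {..<n}" "s' \<in> Pow {..<n}" using s s' by auto
  have "idm s s' = (\<Sum>R\<in>Pow {..<n}. cnj (W R s) * W R s')"
    using c sP unfolding cunit_def eqm_def mmult_def adj_def by auto
  also have "\<dots> = (\<Sum>a\<in>Pow A. \<Sum>b\<in>Pow ({..<n} - A). cnj (W (a \<union> b) ({} \<union> s)) * W (a \<union> b) ({} \<union> s'))"
    using split_pow[OF A] by simp
  also have "\<dots> = (\<Sum>b\<in>Pow ({..<n} - A). cnj (W ({} \<union> b) ({} \<union> s)) * W ({} \<union> b) ({} \<union> s'))"
  proof (rule sum_single)
    fix a assume a: "a \<in> Pow A" "a \<noteq> {}"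
    show "(\<Sum>b\<in>Pow ({..<n} - A). cnj (W (a \<union> b) ({} \<union> s)) * W (a \<union> b) ({} \<union> s')) = 0"
      by (rule sum.neutral) (use locB_entry[OF W A a(1) e _ s] a(2) in auto)
  qed (use finite_subset[OF A] in auto)
  also have "\<dots> = (\<Sum>b\<in>Pow ({..<n} - A). cnj (W b s) * W b s')" by simp
  finally show ?thesis by simp
qed

lemma rho_eqv:
  assumes A: "A \<subseteq> {..<n}" and e1: "eqv n p1 p1'" and e2: "eqv n p2 p2'"
    and a: "a \<in> Pow A" and a': "a' \<in> Pow A"
  shows "rho n A p1 p2 a a' = rho n A p1' p2' a a'"
  unfolding rho_def
proof (rule sum.cong[OF refl])
  fix b assume b: "b \<in> Pow ({..<n} - A)"
  have "a \<union> b \<in> Pow {..<n}" "a' \<union> b \<in> Pow {..<n}" using a a' b A by auto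
  then show "p1 (a \<union> b) * cnj (p2 (a' \<union> b)) = p1' (a \<union> b) * cnj (p2' (a' \<union> b))"
    using e1 e2 unfolding eqv_def by simp
qed

lemma rho_W:
  assumes W: "loc n ({..<n} - A) W" and A: "A \<subseteq> {..<n}" and c: "cunit n W"
    and a: "a \<in> Pow A" and a': "a' \<in> Pow A"
  shows "rho n A (mvec n W p1) (mvec n W p2) a a' = rho n A p1 p2 a a'"
proof -
  let ?B = "Pow ({..<n} - A)"
  have U: "(\<Sum>b\<in>?B. W b s * cnj (W b s')) = idm s s'" if "s \<in> ?B" "s' \<in> ?B" for s s'
  proof -
    have "(\<Sum>b\<in>?B. W b s * cnj (W b s')) = cnj (\<Sum>b\<in>?B. cnj (W b s) * W b s')"
      by (simp add: mult.commute)
    also have "\<dots> = idm s s'" using locB_cunit[OF W A c that] by (simp add: idm_def)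
    finally show ?thesis .
  qed
  have "rho n A (mvec n W p1) (mvec n W p2) a a'
      = (\<Sum>b\<in>?B. (\<Sum>s\<in>?B. W b s * p1 (a \<union> s)) * cnj (\<Sum>s'\<in>?B. W b s' * p2 (a' \<union> s')))"
    unfolding rho_def by (rule sum.cong[OF refl]) (simp add: locB_apply[OF W A a] locB_apply[OF W A a'])
  also have "\<dots> = (\<Sum>b\<in>?B. \<Sum>s\<in>?B. \<Sum>s'\<in>?B. (W b s * cnj (W b s')) * (p1 (a \<union> s) * cnj (p2 (a' \<union> s'))))"
    by (simp only: cnj_sum complex_cnj_mult sum_product) (simp add: mult_ac)
  also have "\<dots> = (\<Sum>s\<in>?B. \<Sum>s'\<in>?B. \<Sum>b\<in>?B. (W b s * cnj (W b s')) * (p1 (a \<union> s) * cnj (p2 (a' \<union> s'))))"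
    by (rule sum_swap3)
  also have "\<dots> = (\<Sum>s\<in>?B. \<Sum>s'\<in>?B. idm s s' * (p1 (a \<union> s) * cnj (p2 (a' \<union> s'))))"
    by (intro sum.cong refl) (simp add: sum_distrib_right[symmetric] U)
  also have "\<dots> = rho n A p1 p2 a a'"
    by (simp add: rho_def idm_def sum_ifl)
  finally show ?thesis .
qed

lemma rho_V:
  assumes V1: "loc n A V1" and V2: "loc n A V2" and A: "A \<subseteq> {..<n}"
    and a: "a \<in> Pow A" and a': "a' \<in> Pow A"
  shows "rho n A (mvec n V1 p1) (mvec n V2 p2) a a'
     = (\<Sum>r\<in>Pow A. \<Sum>r'\<in>Pow A. (V1 a r * cnj (V2 a' r')) * rho n A p1 p2 r r')"
proof -
  let ?B = "Pow ({..<n} - A)"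
  have "rho n A (mvec n V1 p1) (mvec n V2 p2) a a'
      = (\<Sum>b\<in>?B. (\<Sum>r\<in>Pow A. V1 a r * p1 (r \<union> b)) * cnj (\<Sum>r'\<in>Pow A. V2 a' r' * p2 (r' \<union> b)))"
    unfolding rho_def by (rule sum.cong[OF refl]) (simp add: locA_apply[OF V1 A a] locA_apply[OF V2 A a'])
  also have "\<dots> = (\<Sum>b\<in>?B. \<Sum>r\<in>Pow A. \<Sum>r'\<in>Pow A. (V1 a r * cnj (V2 a' r')) * (p1 (r \<union> b) * cnj (p2 (r' \<union> b))))"
    by (simp only: cnj_sum complex_cnj_mult sum_product) (simp add: mult_ac)
  also have "\<dots> = (\<Sum>r\<in>Pow A. \<Sum>r'\<in>Pow A. \<Sum>b\<in>?B. (V1 a r * cnj (V2 a' r')) * (p1 (r \<union> b) * cnj (p2 (r' \<union> b))))"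
    by (rule sum_swap3)
  also have "\<dots> = (\<Sum>r\<in>Pow A. \<Sum>r'\<in>Pow A. (V1 a r * cnj (V2 a' r')) * rho n A p1 p2 r r')"
    by (simp add: rho_def sum_distrib_left)
  finally show ?thesis .
qed


lemma sum_swap4: "(\<Sum>a\<in>X. \<Sum>b\<in>X. \<Sum>c\<in>X. \<Sum>d\<in>X. f a b c d) = (\<Sum>b\<in>X. \<Sum>d\<in>X. \<Sum>a\<in>X. \<Sum>c\<in>X. f a b c d)"
proof -
  have "(\<Sum>a\<in>X. \<Sum>b\<in>X. \<Sum>c\<in>X. \<Sum>d\<in>X. f a b c d) = (\<Sum>b\<in>X. \<Sum>a\<in>X. \<Sum>c\<in>X. \<Sum>d\<in>X. f a b c d)"
    by (rule sum.swap)
  also have "\<dots> = (\<Sum>b\<in>X. \<Sum>c\<in>X. \<Sum>d\<in>X. \<Sum>a\<in>X. f a b c d)"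
    by (rule sum.cong[OF refl], rule sum_swap3)
  also have "\<dots> = (\<Sum>b\<in>X. \<Sum>d\<in>X. \<Sum>a\<in>X. \<Sum>c\<in>X. f a b c d)"
    by (rule sum.cong[OF refl], rule sum_swap3)
  finally show ?thesis .
qed

lemma locA_cunit':
  assumes V: "loc n A V" and A: "A \<subseteq> {..<n}" and c: "cunit n V" and r: "r \<in> Pow A" and r': "r' \<in> Pow A"
  shows "(\<Sum>a\<in>Pow A. V a r * cnj (V a r')) = idm r r'"
proof -
  have "(\<Sum>a\<in>Pow A. V a r * cnj (V a r')) = cnj (\<Sum>a\<in>Pow A. cnj (V a r) * V a r')"
    by (simp add: mult.commute)
  also have "\<dots> = idm r r'" using locA_cunit[OF V A c r r'] by (simp add: idm_def)
  finally show ?thesis .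
qed

lemma tau_norm:
  assumes V1: "loc n A V1" "cunit n V1" and V2: "loc n A V2" "cunit n V2" and A: "A \<subseteq> {..<n}"
  shows "(\<Sum>aq\<in>Pow A. \<Sum>aq'\<in>Pow A. (cmod (\<Sum>r\<in>Pow A. \<Sum>r'\<in>Pow A. (V1 aq r * cnj (V2 aq' r')) * m r r'))\<^sup>2)
       = (\<Sum>r\<in>Pow A. \<Sum>r'\<in>Pow A. (cmod (m r r'))\<^sup>2)"
proof -
  have fA: "finite (Pow A)" using finite_subset[OF A] by simp
  define N where "N r aq' = (\<Sum>r'\<in>Pow A. cnj (V2 aq' r') * m r r')" for r aq'
  have t: "(\<Sum>r\<in>Pow A. \<Sum>r'\<in>Pow A. (V1 aq r * cnj (V2 aq' r')) * m r r') = (\<Sum>r\<in>Pow A. V1 aq r * N r aq')" for aq aq'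
    unfolding N_def by (simp add: sum_distrib_left mult_ac)
  have "(\<Sum>aq\<in>Pow A. \<Sum>aq'\<in>Pow A. (cmod (\<Sum>r\<in>Pow A. \<Sum>r'\<in>Pow A. (V1 aq r * cnj (V2 aq' r')) * m r r'))\<^sup>2)
      = (\<Sum>aq'\<in>Pow A. \<Sum>aq\<in>Pow A. (cmod (\<Sum>r\<in>Pow A. V1 aq r * N r aq'))\<^sup>2)"
    unfolding t by (rule sum.swap)
  also have "\<dots> = (\<Sum>aq'\<in>Pow A. \<Sum>r\<in>Pow A. (cmod (N r aq'))\<^sup>2)"
    by (rule sum.cong[OF refl], rule unorm[OF fA]) (use locA_cunit[OF V1(1) A V1(2)] in auto)
  also have "\<dots> = (\<Sum>r\<in>Pow A. \<Sum>aq'\<in>Pow A. (cmod (N r aq'))\<^sup>2)"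
    by (rule sum.swap)
  also have "\<dots> = (\<Sum>r\<in>Pow A. \<Sum>r'\<in>Pow A. (cmod (m r r'))\<^sup>2)"
    unfolding N_def
    by (rule sum.cong[OF refl], rule unorm[OF fA]) (use locA_cunit'[OF V2(1) A V2(2)] in auto)
  finally show ?thesis .
qed

lemma block_formula:
  fixes s :: qvec and chi :: "nat set \<Rightarrow> qvec" and xi :: "nat \<Rightarrow> qvec" and G :: "nat \<Rightarrow> nat"
  assumes A: "A \<subseteq> {..<n}"
    and V: "\<forall>x\<in>Pow A. cunit n (Vf x) \<and> loc n A (Vf x)"
    and W: "\<forall>y\<in>Pow ({..<n} - A). cunit n (Wf y) \<and> loc n ({..<n} - A) (Wf y)"
    and H2: "\<forall>F\<in>Pow {..<n}. s F \<noteq> 0 \<longrightarrow> eqv n (chi F) (mvec n (Vf (F \<inter> A)) (mvec n (Wf (F - A)) (xi (G (card (F \<inter> A))))))"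
    and H3: "\<forall>F\<in>Pow {..<n}. s F \<noteq> 0 \<longrightarrow> card F = M"
  shows "purity_joint n A (\<lambda>S F. s F * chi F S)
     = (\<Sum>af\<in>Pow A. \<Sum>af'\<in>Pow A. (cmod (rho n A s s af af'))\<^sup>2 * purity n A (xi (G (card af))))"
proof -
  let ?B = "Pow ({..<n} - A)"
  let ?P = "\<lambda>S F. s F * chi F S"
  have fA: "finite A" using finite_subset[OF A] by simp
  define tau where "tau af af' aq aq' = (\<Sum>r\<in>Pow A. \<Sum>r'\<in>Pow A. (Vf af aq r * cnj (Vf af' aq' r'))
      * rho n A (xi (G (card af))) (xi (G (card af'))) r r')" for af af' aq aq'
  have key: "rho n A (chi (af \<union> bf)) (chi (af' \<union> bf)) aq aq' = tau af af' aq aq'"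
    if af: "af \<in> Pow A" and af': "af' \<in> Pow A" and aq: "aq \<in> Pow A" and aq': "aq' \<in> Pow A"
      and bf: "bf \<in> ?B" and s1: "s (af \<union> bf) \<noteq> 0" and s2: "s (af' \<union> bf) \<noteq> 0" for af af' aq aq' bf
  proof -
    have F1: "af \<union> bf \<in> Pow {..<n}" "(af \<union> bf) \<inter> A = af" "af \<union> bf - A = bf" using af bf A by auto
    have F2: "af' \<union> bf \<in> Pow {..<n}" "(af' \<union> bf) \<inter> A = af'" "af' \<union> bf - A = bf" using af' bf A by auto
    have e1: "eqv n (chi (af \<union> bf)) (mvec n (Vf af) (mvec n (Wf bf) (xi (G (card af)))))"
      using H2 F1 s1 by auto
    have e2: "eqv n (chi (af' \<union> bf)) (mvec n (Vf af') (mvec n (Wf bf) (xi (G (card af')))))"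
      using H2 F2 s2 by auto
    have Vaf: "loc n A (Vf af)" and Vaf': "loc n A (Vf af')" using V af af' by auto
    have Wbf: "loc n ({..<n} - A) (Wf bf)" "cunit n (Wf bf)" using W bf by auto
    have "rho n A (chi (af \<union> bf)) (chi (af' \<union> bf)) aq aq'
        = rho n A (mvec n (Vf af) (mvec n (Wf bf) (xi (G (card af))))) (mvec n (Vf af') (mvec n (Wf bf) (xi (G (card af'))))) aq aq'"
      by (rule rho_eqv[OF A e1 e2 aq aq'])
    also have "\<dots> = (\<Sum>r\<in>Pow A. \<Sum>r'\<in>Pow A. (Vf af aq r * cnj (Vf af' aq' r'))
        * rho n A (mvec n (Wf bf) (xi (G (card af)))) (mvec n (Wf bf) (xi (G (card af')))) r r')"
      by (rule rho_V[OF Vaf Vaf' A aq aq'])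
    also have "\<dots> = tau af af' aq aq'"
      unfolding tau_def by (intro sum.cong refl) (simp add: rho_W[OF Wbf(1) A Wbf(2)])
    finally show ?thesis .
  qed
  have rhoJ_eq: "rhoJ n A ?P aq af aq' af' = rho n A s s af af' * tau af af' aq aq'"
    if af: "af \<in> Pow A" and af': "af' \<in> Pow A" and aq: "aq \<in> Pow A" and aq': "aq' \<in> Pow A" for af af' aq aq'
  proof -
    have "rhoJ n A ?P aq af aq' af' = (\<Sum>bq\<in>?B. \<Sum>bf\<in>?B.
        (s (af \<union> bf) * cnj (s (af' \<union> bf))) * (chi (af \<union> bf) (aq \<union> bq) * cnj (chi (af' \<union> bf) (aq' \<union> bq))))"
      unfolding rhoJ_def by (intro sum.cong refl) (simp add: mult_ac)
    also have "\<dots> = (\<Sum>bf\<in>?B. \<Sum>bq\<in>?B.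
        (s (af \<union> bf) * cnj (s (af' \<union> bf))) * (chi (af \<union> bf) (aq \<union> bq) * cnj (chi (af' \<union> bf) (aq' \<union> bq))))"
      by (rule sum.swap)
    also have "\<dots> = (\<Sum>bf\<in>?B. (s (af \<union> bf) * cnj (s (af' \<union> bf))) * rho n A (chi (af \<union> bf)) (chi (af' \<union> bf)) aq aq')"
      by (simp add: rho_def sum_distrib_left)
    also have "\<dots> = (\<Sum>bf\<in>?B. (s (af \<union> bf) * cnj (s (af' \<union> bf))) * tau af af' aq aq')"
    proof (rule sum.cong[OF refl])
      fix bf assume bf: "bf \<in> ?B"
      show "(s (af \<union> bf) * cnj (s (af' \<union> bf))) * rho n A (chi (af \<union> bf)) (chi (af' \<union> bf)) aq aq'
          = (s (af \<union> bf) * cnj (s (af' \<union> bf))) * tau af af' aq aq'"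
      proof (cases "s (af \<union> bf) \<noteq> 0 \<and> s (af' \<union> bf) \<noteq> 0")
        case True
        then show ?thesis using key[OF af af' aq aq' bf] by simp
      next
        case False
        then show ?thesis by auto
      qed
    qed
    also have "\<dots> = rho n A s s af af' * tau af af' aq aq'"
      by (simp add: rho_def sum_distrib_right)
    finally show ?thesis .
  qed
  have offblock: "rho n A s s af af' = 0" if af: "af \<in> Pow A" and af': "af' \<in> Pow A" and ne: "card af \<noteq> card af'" for af af'
    unfolding rho_def
  proof (rule sum.neutral, rule ballI)
    fix bf assume bf: "bf \<in> ?B"
    show "s (af \<union> bf) * cnj (s (af' \<union> bf)) = 0"
    proof (rule ccontr)
      assume "s (af \<union> bf) * cnj (s (af' \<union> bf)) \<noteq> 0"
      then have "s (af \<union> bf) \<noteq> 0" "s (af' \<union> bf) \<noteq> 0" by auto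
      moreover have "af \<union> bf \<in> Pow {..<n}" "af' \<union> bf \<in> Pow {..<n}" using af af' bf A by auto
      ultimately have "card (af \<union> bf) = M" "card (af' \<union> bf) = M" using H3 by auto
      moreover have "finite af" "finite af'" "finite bf" using af af' bf fA finite_subset by (auto intro: finite_subset[of _ "{..<n}"])
      moreover have "af \<inter> bf = {}" "af' \<inter> bf = {}" using af af' bf by auto
      ultimately have "card af + card bf = card af' + card bf" by (simp add: card_Un_disjoint)
      then show False using ne by simp
    qed
  qed
  have "purity_joint n A ?P = (\<Sum>aq\<in>Pow A. \<Sum>af\<in>Pow A. \<Sum>aq'\<in>Pow A. \<Sum>af'\<in>Pow A.
      (cmod (rho n A s s af af'))\<^sup>2 * (cmod (tau af af' aq aq'))\<^sup>2)"
    unfolding purityJ_rho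
    by (intro sum.cong refl) (simp add: rhoJ_eq norm_mult power_mult_distrib)
  also have "\<dots> = (\<Sum>af\<in>Pow A. \<Sum>af'\<in>Pow A. \<Sum>aq\<in>Pow A. \<Sum>aq'\<in>Pow A.
      (cmod (rho n A s s af af'))\<^sup>2 * (cmod (tau af af' aq aq'))\<^sup>2)"
    by (rule sum_swap4)
  also have "\<dots> = (\<Sum>af\<in>Pow A. \<Sum>af'\<in>Pow A. (cmod (rho n A s s af af'))\<^sup>2 *
      (\<Sum>aq\<in>Pow A. \<Sum>aq'\<in>Pow A. (cmod (tau af af' aq aq'))\<^sup>2))"
    by (simp add: sum_distrib_left)
  also have "\<dots> = (\<Sum>af\<in>Pow A. \<Sum>af'\<in>Pow A. (cmod (rho n A s s af af'))\<^sup>2 * purity n A (xi (G (card af))))"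
  proof (intro sum.cong refl)
    fix af af' assume af: "af \<in> Pow A" and af': "af' \<in> Pow A"
    show "(cmod (rho n A s s af af'))\<^sup>2 * (\<Sum>aq\<in>Pow A. \<Sum>aq'\<in>Pow A. (cmod (tau af af' aq aq'))\<^sup>2)
        = (cmod (rho n A s s af af'))\<^sup>2 * purity n A (xi (G (card af)))"
    proof (cases "card af = card af'")
      case True
      have V1: "loc n A (Vf af)" "cunit n (Vf af)" and V2: "loc n A (Vf af')" "cunit n (Vf af')"
        using V af af' by auto
      have "(\<Sum>aq\<in>Pow A. \<Sum>aq'\<in>Pow A. (cmod (tau af af' aq aq'))\<^sup>2)
          = (\<Sum>r\<in>Pow A. \<Sum>r'\<in>Pow A. (cmod (rho n A (xi (G (card af))) (xi (G (card af'))) r r'))\<^sup>2)"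
        unfolding tau_def by (rule tau_norm[OF V1 V2 A])
      also have "\<dots> = purity n A (xi (G (card af)))" using True by (simp add: purity_rho)
      finally show ?thesis by simp
    next
      case False
      then show ?thesis using offblock[OF af af'] by simp
    qed
  qed
  finally show ?thesis .
qed


lemma purity_nonneg: "0 \<le> purity n A p"
  unfolding purity_rho by (intro sum_nonneg) auto

lemma rho_diag_Re: "Re (rho n A s s a a) = (\<Sum>b\<in>Pow ({..<n} - A). (cmod (s (a \<union> b)))\<^sup>2)"
proof -
  have "rho n A s s a a = complex_of_real (\<Sum>b\<in>Pow ({..<n} - A). (cmod (s (a \<union> b)))\<^sup>2)"
    unfolding rho_def of_real_sum_sq ..
  then show ?thesis by simp
qed

lemma generic_ineq:
  fixes s :: qvec and chi :: "nat set \<Rightarrow> qvec" and xi :: "nat \<Rightarrow> qvec" and G :: "nat \<Rightarrow> nat"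
  assumes A: "A \<subseteq> {..<n}"
    and V: "\<forall>x\<in>Pow A. cunit n (Vf x) \<and> loc n A (Vf x)"
    and W: "\<forall>y\<in>Pow ({..<n} - A). cunit n (Wf y) \<and> loc n ({..<n} - A) (Wf y)"
    and H2: "\<forall>F\<in>Pow {..<n}. s F \<noteq> 0 \<longrightarrow> eqv n (chi F) (mvec n (Vf (F \<inter> A)) (mvec n (Wf (F - A)) (xi (G (card (F \<inter> A))))))"
    and H3: "\<forall>F\<in>Pow {..<n}. s F \<noteq> 0 \<longrightarrow> card F = M"
    and nz: "\<exists>F\<in>Pow {..<n}. s F \<noteq> 0"
    and good: "\<forall>af\<in>Pow A. \<forall>bf\<in>Pow ({..<n} - A). s (af \<union> bf) \<noteq> 0 \<longrightarrow>
        0 < purity n A (xi (G (card af))) \<and> m0 \<le> renyi2 n A (xi (G (card af)))"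
  shows "renyi2 n A s + m0 \<le> renyi2_joint n A (\<lambda>S F. s F * chi F S)"
proof -
  let ?B = "Pow ({..<n} - A)"
  let ?P = "\<lambda>af. purity n A (xi (G (card af)))"
  let ?r = "\<lambda>af af'. (cmod (rho n A s s af af'))\<^sup>2"
  define K where "K = {af \<in> Pow A. \<exists>bf\<in>?B. s (af \<union> bf) \<noteq> 0}"
  have fA: "finite A" using finite_subset[OF A] by simp
  have finK: "finite K" unfolding K_def using fA by auto
  obtain F0 where F0: "F0 \<in> Pow {..<n}" "s F0 \<noteq> 0" using nz by blast
  have F0s: "F0 = (F0 \<inter> A) \<union> (F0 - A)" by auto
  have af0K: "F0 \<inter> A \<in> K" unfolding K_def using F0 F0s
    by (auto intro!: bexI[of _ "F0 - A"])
  have Kne: "K \<noteq> {}" using af0K by auto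
  define Pm where "Pm = Max (?P ` K)"
  have PmK: "Pm \<in> ?P ` K" unfolding Pm_def using finK Kne by (intro Max_in) auto
  then obtain afs where afs: "afs \<in> K" "?P afs = Pm" by auto
  have Ple: "?P af \<le> Pm" if "af \<in> K" for af unfolding Pm_def using finK that by (intro Max_ge) auto
  have notK: "rho n A s s af af' = 0" if "af \<in> Pow A" "af \<notin> K" for af af'
    unfolding rho_def using that by (intro sum.neutral) (auto simp: K_def)
  have goodK: "0 < ?P af \<and> m0 \<le> renyi2 n A (xi (G (card af)))" if "af \<in> K" for af
    using good that unfolding K_def by blast
  have pj: "purity_joint n A (\<lambda>S F. s F * chi F S) = (\<Sum>af\<in>Pow A. \<Sum>af'\<in>Pow A. ?r af af' * ?P af)"
    by (rule block_formula[where A=A and n=n and Vf=Vf and Wf=Wf and s=s and chi=chi and xi=xi and G=G and M=M, OF A V W H2 H3])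
  have ps: "purity n A s = (\<Sum>af\<in>Pow A. \<Sum>af'\<in>Pow A. ?r af af')" by (rule purity_rho)
  have up: "purity_joint n A (\<lambda>S F. s F * chi F S) \<le> Pm * purity n A s"
    unfolding pj ps sum_distrib_left
  proof (intro sum_mono)
    fix af af' assume af: "af \<in> Pow A" and af': "af' \<in> Pow A"
    show "?r af af' * ?P af \<le> Pm * ?r af af'"
    proof (cases "af \<in> K")
      case True
      then show ?thesis using Ple[OF True] by (simp add: mult.commute mult_right_mono)
    next
      case False
      then show ?thesis using notK[OF af False] by simp
    qed
  qed
  let ?a0 = "F0 \<inter> A"
  have a0A: "?a0 \<in> Pow A" by auto
  have r0: "0 < ?r ?a0 ?a0"
  proof -
    have "F0 - A \<in> ?B" using F0 by auto
    then have "0 < (cmod (s (?a0 \<union> (F0 - A))))\<^sup>2" using F0 F0s by (metis zero_less_power2 norm_eq_zero)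
    also have "\<dots> \<le> (\<Sum>b\<in>?B. (cmod (s (?a0 \<union> b)))\<^sup>2)"
      using \<open>F0 - A \<in> ?B\<close> by (intro member_le_sum) auto
    also have "\<dots> = Re (rho n A s s ?a0 ?a0)" by (simp add: rho_diag_Re)
    finally have "rho n A s s ?a0 ?a0 \<noteq> 0" by auto
    then show ?thesis by simp
  qed
  have ps_ge: "?r ?a0 ?a0 \<le> purity n A s"
  proof -
    have "?r ?a0 ?a0 \<le> (\<Sum>af'\<in>Pow A. ?r ?a0 af')" using a0A fA by (intro member_le_sum) auto
    also have "\<dots> \<le> (\<Sum>af\<in>Pow A. \<Sum>af'\<in>Pow A. ?r af af')" using a0A fA
      by (intro member_le_sum[of ?a0 "Pow A" "\<lambda>af. \<Sum>af'\<in>Pow A. ?r af af'"] sum_nonneg) auto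
    finally show ?thesis using ps by simp
  qed
  have pj_ge: "?r ?a0 ?a0 * ?P ?a0 \<le> purity_joint n A (\<lambda>S F. s F * chi F S)"
  proof -
    have nn: "0 \<le> ?r af af' * ?P af" for af af' by (simp add: purity_nonneg)
    have "?r ?a0 ?a0 * ?P ?a0 \<le> (\<Sum>af'\<in>Pow A. ?r ?a0 af' * ?P ?a0)"
      using a0A fA nn by (intro member_le_sum) auto
    also have "\<dots> \<le> (\<Sum>af\<in>Pow A. \<Sum>af'\<in>Pow A. ?r af af' * ?P af)" using a0A fA nn
      by (intro member_le_sum[of ?a0 "Pow A" "\<lambda>af. \<Sum>af'\<in>Pow A. ?r af af' * ?P af"] sum_nonneg) auto
    finally show ?thesis using pj by simp
  qed
  have P0: "0 < ?P ?a0" using goodK[OF af0K] by simp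
  have pjpos: "0 < purity_joint n A (\<lambda>S F. s F * chi F S)"
    using pj_ge r0 P0 by (meson mult_pos_pos less_le_trans)
  have pspos: "0 < purity n A s" using ps_ge r0 by linarith
  have Pmpos: "0 < Pm" using goodK[OF afs(1)] afs(2) by simp
  have "ln (purity_joint n A (\<lambda>S F. s F * chi F S)) \<le> ln (Pm * purity n A s)"
    using up pjpos by simp
  also have "\<dots> = ln Pm + ln (purity n A s)" using Pmpos pspos by (simp add: ln_mult)
  finally have "- ln Pm - ln (purity n A s) \<le> - ln (purity_joint n A (\<lambda>S F. s F * chi F S))" by linarith
  moreover have "m0 \<le> - ln Pm" using goodK[OF afs(1)] afs(2) by (simp add: renyi2_def)
  ultimately show ?thesis by (simp add: renyi2_def renyi2_joint_def)
qed


lemma nrm_mvec: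
  assumes c: "cunit n U"
  shows "nrm n (mvec n U p) = nrm n p"
  unfolding nrm_def mvec_def
  by (rule unorm) (use c in \<open>auto simp: cunit_def eqm_def mmult_def adj_def\<close>)

lemma nrm_eqv: "eqv n p q \<Longrightarrow> nrm n p = nrm n q"
  unfolding nrm_def eqv_def by (intro sum.cong) auto

lemma purity_pos:
  assumes A: "A \<subseteq> {..<n}" and np: "0 < nrm n p"
  shows "0 < purity n A p"
proof -
  have "nrm n p = (\<Sum>a\<in>Pow A. \<Sum>b\<in>Pow ({..<n} - A). (cmod (p (a \<union> b)))\<^sup>2)"
    unfolding nrm_def by (rule split_pow[OF A])
  also have "\<dots> = (\<Sum>a\<in>Pow A. Re (rho n A p p a a))" by (simp add: rho_diag_Re)
  finally have "0 < (\<Sum>a\<in>Pow A. Re (rho n A p p a a))" using np by simp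
  then obtain a where a: "a \<in> Pow A" "0 < Re (rho n A p p a a)"
    by (metis (no_types, lifting) not_less sum_nonpos)
  then have "rho n A p p a a \<noteq> 0" by auto
  then have "0 < (cmod (rho n A p p a a))\<^sup>2" by simp
  also have "\<dots> \<le> (\<Sum>a'\<in>Pow A. (cmod (rho n A p p a a'))\<^sup>2)"
    using a finite_subset[OF A] by (intro member_le_sum) auto
  also have "\<dots> \<le> (\<Sum>a\<in>Pow A. \<Sum>a'\<in>Pow A. (cmod (rho n A p p a a'))\<^sup>2)"
    using a finite_subset[OF A]
    by (intro member_le_sum[of a "Pow A" "\<lambda>a. \<Sum>a'\<in>Pow A. (cmod (rho n A p p a a'))\<^sup>2"] sum_nonneg) auto
  finally show ?thesis by (simp add: purity_rho)
qed

context circ begin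

lemma nrm_UT:
  assumes T: "T \<subseteq> {..<n}"
  shows "nrm n (UT n u T p) = nrm n p"
proof -
  have "eqv n (UT n u T p) (mvec n (opL n u (sorted_list_of_set T)) p)"
    unfolding UT_fv by (rule fv_opL)
  moreover have "uni n (opL n u (sorted_list_of_set T))"
    by (rule opL_uni) (use T finite_subset[OF T] in auto)
  ultimately show ?thesis using nrm_eqv nrm_mvec uni_def by metis
qed

end

definition sg :: "nat set \<Rightarrow> nat \<Rightarrow> complex" where
  "sg F t = (-1) ^ card {s\<in>F. s < t}"

definition cann :: "nat \<Rightarrow> qvec \<Rightarrow> qvec" where
  "cann t v F = (if t \<notin> F then sg F t * v (insert t F) else 0)"

lemma cdag_sg: "cdag t v F = (if t \<in> F then sg F t * v (F - {t}) else 0)"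
  by (simp add: cdag_def sg_def)

lemma sg_sq: "sg F t * sg F t = 1"
  by (simp add: sg_def power_add[symmetric])

lemma sg_cnj: "cnj (sg F t) = sg F t"
  by (simp add: sg_def)

lemma sg_insert:
  assumes "finite F" "s \<notin> F"
  shows "sg (insert s F) t = (if s < t then -1 else 1) * sg F t"
proof (cases "s < t")
  case True
  have "{x\<in>insert s F. x < t} = insert s {x\<in>F. x < t}" using True by auto
  moreover have "s \<notin> {x\<in>F. x < t}" using assms by auto
  moreover have "finite {x\<in>F. x < t}" using assms by auto
  ultimately show ?thesis using True by (simp add: sg_def)
next
  case False
  have "{x\<in>insert s F. x < t} = {x\<in>F. x < t}" using False by auto
  then show ?thesis using False by (simp add: sg_def)
qed

lemma sg_self_insert: "sg (insert t F) t = sg F t"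
proof -
  have "{x\<in>insert t F. x < t} = {x\<in>F. x < t}" by auto
  then show ?thesis by (simp add: sg_def)
qed

lemma sg_remove:
  assumes "finite F" "t \<in> F"
  shows "sg F s = (if t < s then -1 else 1) * sg (F - {t}) s"
proof -
  have "F = insert t (F - {t})" using assms by auto
  then have "sg F s = sg (insert t (F - {t})) s" by simp
  also have "\<dots> = (if t < s then -1 else 1) * sg (F - {t}) s"
    by (rule sg_insert) (use assms in auto)
  finally show ?thesis .
qed

lemma aux_sign:
  fixes al be x y w :: complex
  assumes "al * be = -1"
  shows "(be * x) * ((al * y) * w) = - (y * (x * w))"
proof -
  have "(be * x) * ((al * y) * w) = (al * be) * (y * (x * w))" by (simp only: mult_ac)
  then show ?thesis using assms by simp
qed

lemma car:
  assumes fin: "finite F"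
  shows "cann s (cdag t v) F + cdag t (cann s v) F = (if s = t then v F else 0)"
proof (cases "s = t")
  case True
  show ?thesis
  proof (cases "t \<in> F")
    case tF: True
    have "cdag t (cann t v) F = sg F t * (sg (F - {t}) t * v (insert t (F - {t})))"
      using tF by (simp add: cdag_sg cann_def)
    also have "insert t (F - {t}) = F" using tF by auto
    also have "sg (F - {t}) t = sg F t" using sg_remove[OF fin tF, of t] by simp
    finally have "cdag t (cann t v) F = v F" by (simp add: sg_sq mult.assoc[symmetric])
    moreover have "cann t (cdag t v) F = 0" using tF by (simp add: cann_def)
    ultimately show ?thesis using True by simp
  next
    case tF: False
    have "cann t (cdag t v) F = sg F t * (sg (insert t F) t * v (insert t F - {t}))"
      using tF by (simp add: cdag_sg cann_def)
    also have "insert t F - {t} = F" using tF by auto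
    also have "sg (insert t F) t = sg F t" by (rule sg_self_insert)
    finally have "cann t (cdag t v) F = v F" by (simp add: sg_sq mult.assoc[symmetric])
    moreover have "cdag t (cann t v) F = 0" using tF by (simp add: cdag_sg)
    ultimately show ?thesis using True by simp
  qed
next
  case False
  show ?thesis
  proof (cases "s \<notin> F \<and> t \<in> F")
    case True
    have e: "insert s F - {t} = insert s (F - {t})" using False by auto
    have a1: "cann s (cdag t v) F = sg F s * (sg (insert s F) t * v (insert s (F - {t})))"
      using True False e by (simp add: cdag_sg cann_def)
    have a2: "cdag t (cann s v) F = sg F t * (sg (F - {t}) s * v (insert s (F - {t})))"
      using True False by (simp add: cdag_sg cann_def)
    have i1: "sg (insert s F) t = (if s < t then -1 else 1) * sg F t" using sg_insert[OF fin] True by simp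
    have i2: "sg F s = (if t < s then -1 else 1) * sg (F - {t}) s" using sg_remove[OF fin] True by simp
    have "(if s < t then -1 else 1) * (if t < s then -1 else 1) = (-1::complex)" using False by auto
    then have "cann s (cdag t v) F = - cdag t (cann s v) F"
      unfolding a1 a2 i1 i2 by (rule aux_sign)
    then show ?thesis using False by simp
  next
    case nT: False
    have "cann s (cdag t v) F = 0" using nT False by (auto simp: cdag_sg cann_def)
    moreover have "cdag t (cann s v) F = 0" using nT False by (auto simp: cdag_sg cann_def)
    ultimately show ?thesis using False by simp
  qed
qed

definition ip :: "nat \<Rightarrow> qvec \<Rightarrow> qvec \<Rightarrow> complex" where
  "ip n v w = (\<Sum>F\<in>Pow {..<n}. cnj (v F) * w F)"

lemma ip_cnj: "ip n w v = cnj (ip n v w)"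
  by (simp add: ip_def mult.commute)

lemma ip_eqv: "eqv n v v' \<Longrightarrow> eqv n w w' \<Longrightarrow> ip n v w = ip n v' w'"
  unfolding ip_def eqv_def by (intro sum.cong) auto

lemma pow_t_split:
  fixes g :: "nat set \<Rightarrow> complex" and t n :: nat
  assumes t: "t < n"
  shows "(\<Sum>F\<in>Pow {..<n}. g F) = (\<Sum>b\<in>Pow ({..<n} - {t}). g b + g (insert t b))"
proof -
  have A: "{t} \<subseteq> {..<n}" using t by auto
  have "(\<Sum>F\<in>Pow {..<n}. g F) = (\<Sum>a\<in>Pow {t}. \<Sum>b\<in>Pow ({..<n} - {t}). g (a \<union> b))"
    by (rule split_pow[OF A])
  also have "Pow {t} = {{}, {t}}" by blast
  also have "(\<Sum>a\<in>{{}, {t}}. \<Sum>b\<in>Pow ({..<n} - {t}). g (a \<union> b))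
      = (\<Sum>b\<in>Pow ({..<n} - {t}). g b) + (\<Sum>b\<in>Pow ({..<n} - {t}). g (insert t b))"
    by simp
  also have "\<dots> = (\<Sum>b\<in>Pow ({..<n} - {t}). g b + g (insert t b))"
    by (simp add: sum.distrib)
  finally show ?thesis .
qed

lemma cdag_adj:
  assumes t: "t < n"
  shows "ip n (cdag t v) w = ip n v (cann t w)"
proof -
  have "ip n (cdag t v) w = (\<Sum>b\<in>Pow ({..<n} - {t}). cnj (cdag t v b) * w b + cnj (cdag t v (insert t b)) * w (insert t b))"
    unfolding ip_def by (rule pow_t_split[OF t])
  also have "\<dots> = (\<Sum>b\<in>Pow ({..<n} - {t}). cnj (v b) * cann t w b + cnj (v (insert t b)) * cann t w (insert t b))"
  proof (rule sum.cong[OF refl])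
    fix b assume b: "b \<in> Pow ({..<n} - {t})"
    then have tb: "t \<notin> b" by auto
    have "insert t b - {t} = b" using tb by auto
    then show "cnj (cdag t v b) * w b + cnj (cdag t v (insert t b)) * w (insert t b)
        = cnj (v b) * cann t w b + cnj (v (insert t b)) * cann t w (insert t b)"
      using tb by (simp add: cdag_sg cann_def sg_self_insert sg_cnj mult_ac)
  qed
  also have "\<dots> = ip n v (cann t w)"
    unfolding ip_def by (rule pow_t_split[OF t, symmetric])
  finally show ?thesis .
qed


definition fm :: "nat \<Rightarrow> real \<Rightarrow> nat \<Rightarrow> nat \<Rightarrow> complex" where
  "fm n theta m t = complex_of_real (1 / sqrt (real n))
      * exp (\<i> * complex_of_real ((2 * pi * real m / real n - theta / real n) * real t))"

definition am :: "nat \<Rightarrow> real \<Rightarrow> nat \<Rightarrow> qvec \<Rightarrow> qvec" where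
  "am n theta m w F = (\<Sum>t<n. cnj (fm n theta m t) * cann t w F)"

abbreviation cm :: "nat \<Rightarrow> real \<Rightarrow> nat \<Rightarrow> qvec \<Rightarrow> qvec" where
  "cm n theta m v \<equiv> cdag_mom n theta (2 * pi * real m / real n) v"

lemma cm_eq: "cm n theta m v F = (\<Sum>t<n. fm n theta m t * cdag t v F)"
  by (simp add: cdag_mom_def fm_def)

lemma slater_Cons: "slater n theta (m # ms) = cm n theta m (slater n theta ms)"
  by (simp add: slater_def)

lemma cm_adj: "ip n (cm n theta m v) w = ip n v (am n theta m w)"
proof -
  have "ip n (cm n theta m v) w = (\<Sum>F\<in>Pow {..<n}. \<Sum>t<n. cnj (fm n theta m t) * (cnj (cdag t v F) * w F))"
    unfolding ip_def cm_eq by (simp add: sum_distrib_left sum_distrib_right mult_ac)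
  also have "\<dots> = (\<Sum>t<n. cnj (fm n theta m t) * ip n (cdag t v) w)"
    unfolding ip_def by (subst sum.swap) (simp add: sum_distrib_left)
  also have "\<dots> = (\<Sum>t<n. cnj (fm n theta m t) * ip n v (cann t w))"
    by (intro sum.cong refl) (simp add: cdag_adj)
  also have "\<dots> = (\<Sum>t<n. \<Sum>F\<in>Pow {..<n}. cnj (v F) * (cnj (fm n theta m t) * cann t w F))"
    unfolding ip_def by (simp add: sum_distrib_left mult_ac)
  also have "\<dots> = ip n v (am n theta m w)"
    unfolding ip_def am_def sum_distrib_left by (rule sum.swap)
  finally show ?thesis .
qed

lemma cann_sum: "cann s (\<lambda>G. \<Sum>t<n. c t * g t G) F = (\<Sum>t<n. c t * cann s (g t) F)"
  by (simp add: cann_def sum_distrib_left mult_ac)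

lemma cdag_sum: "cdag t (\<lambda>G. \<Sum>s<n. c s * g s G) F = (\<Sum>s<n. c s * cdag t (g s) F)"
  by (simp add: cdag_def sum_distrib_left mult_ac)

lemma am_cm:
  assumes fin: "finite F"
  shows "am n theta m (cm n theta m' v) F + cm n theta m' (am n theta m v) F
     = (\<Sum>t<n. cnj (fm n theta m t) * fm n theta m' t) * v F"
proof -
  have cmf: "cm n theta m' v = (\<lambda>G. \<Sum>t<n. fm n theta m' t * cdag t v G)"
    by (rule ext) (rule cm_eq)
  have amf: "am n theta m v = (\<lambda>G. \<Sum>s<n. cnj (fm n theta m s) * cann s v G)"
    by (rule ext) (simp add: am_def)
  have "am n theta m (cm n theta m' v) F = (\<Sum>s<n. \<Sum>t<n. (cnj (fm n theta m s) * fm n theta m' t) * cann s (cdag t v) F)"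
    unfolding am_def cmf cann_sum by (simp add: sum_distrib_left mult_ac)
  moreover have "cm n theta m' (am n theta m v) F = (\<Sum>s<n. \<Sum>t<n. (cnj (fm n theta m s) * fm n theta m' t) * cdag t (cann s v) F)"
    unfolding cm_eq amf cdag_sum by (subst sum.swap) (simp add: sum_distrib_left mult_ac)
  ultimately have "am n theta m (cm n theta m' v) F + cm n theta m' (am n theta m v) F
      = (\<Sum>s<n. \<Sum>t<n. (cnj (fm n theta m s) * fm n theta m' t) * (cann s (cdag t v) F + cdag t (cann s v) F))"
    by (simp add: sum.distrib[symmetric] distrib_left)
  also have "\<dots> = (\<Sum>s<n. \<Sum>t<n. (cnj (fm n theta m s) * fm n theta m' t) * (if s = t then v F else 0))"
    by (simp add: car[OF fin])
  also have "\<dots> = (\<Sum>s<n. (cnj (fm n theta m s) * fm n theta m' s) * v F)"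
    by (intro sum.cong refl) (simp add: if_distrib cong: if_cong)
  also have "\<dots> = (\<Sum>t<n. cnj (fm n theta m t) * fm n theta m' t) * v F"
    by (simp add: sum_distrib_right)
  finally show ?thesis .
qed


lemma fm_cis: "fm n theta m t = complex_of_real (1 / sqrt (real n)) * cis ((2 * pi * real m / real n - theta / real n) * real t)"
  by (simp add: fm_def cis_conv_exp)

lemma fm_prod:
  assumes n: "0 < n"
  shows "cnj (fm n theta m t) * fm n theta m' t = complex_of_real (1 / real n) * cis (2 * pi * (real m' - real m) / real n) ^ t"
proof -
  have "cnj (fm n theta m t) * fm n theta m' t
      = (complex_of_real (1 / sqrt (real n)) * complex_of_real (1 / sqrt (real n)))
        * (cis (- ((2 * pi * real m / real n - theta / real n) * real t)) * cis ((2 * pi * real m' / real n - theta / real n) * real t))"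
    by (simp add: fm_cis cis_cnj mult_ac)
  also have "complex_of_real (1 / sqrt (real n)) * complex_of_real (1 / sqrt (real n)) = complex_of_real (1 / real n)"
    using n by (simp flip: of_real_mult)
  also have "cis (- ((2 * pi * real m / real n - theta / real n) * real t)) * cis ((2 * pi * real m' / real n - theta / real n) * real t)
      = cis (real t * (2 * pi * (real m' - real m) / real n))"
    by (simp add: cis_mult algebra_simps diff_divide_distrib)
  also have "\<dots> = cis (2 * pi * (real m' - real m) / real n) ^ t" by (simp add: DeMoivre)
  finally show ?thesis .
qed

lemma cis_ne1:
  assumes n: "0 < n" and m: "m < n" "m' < n" and ne: "m \<noteq> m'"
  shows "cis (2 * pi * (real m' - real m) / real n) \<noteq> 1"
proof
  assume c1: "cis (2 * pi * (real m' - real m) / real n) = 1"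
  have "Re (cis (2 * pi * (real m' - real m) / real n)) = 1" by (simp only: c1) simp
  then have "cos (2 * pi * (real m' - real m) / real n) = 1" by simp
  then obtain k :: int where k: "2 * pi * (real m' - real m) / real n = of_int k * 2 * pi"
    using cos_one_2pi_int by blast
  then have h: "(2 * pi) * ((real m' - real m) / real n) = (2 * pi) * of_int k" by (simp add: mult_ac)
  have "(real m' - real m) / real n = of_int k"
    using h pi_gt_zero by (subst (asm) mult_cancel_left) simp
  then have "real m' - real m = of_int k * real n" using n by (simp add: divide_eq_eq)
  then have e: "int m' - int m = k * int n" by (metis of_int_eq_iff of_int_mult of_int_of_nat_eq of_int_diff)
  show False
  proof (cases "k = 0")
    case True then show False using e ne by simp
  next
    case False
    then have "\<bar>k * int n\<bar> \<ge> int n" by (simp add: abs_mult) (metis abs_ge_self mult_le_cancel_right1 mult.commute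
        abs_of_nat not_less of_nat_less_0_iff zero_less_abs_iff int_one_le_iff_zero_less abs_mult)
    moreover have "\<bar>int m' - int m\<bar> < int n" using m by auto
    ultimately show False using e by simp
  qed
qed

lemma ortho:
  assumes n: "0 < n" and m: "m < n" "m' < n"
  shows "(\<Sum>t<n. cnj (fm n theta m t) * fm n theta m' t) = (if m = m' then 1 else 0)"
proof -
  define z where "z = cis (2 * pi * (real m' - real m) / real n)"
  have "(\<Sum>t<n. cnj (fm n theta m t) * fm n theta m' t) = complex_of_real (1 / real n) * (\<Sum>t<n. z ^ t)"
    by (simp add: fm_prod[OF n] z_def sum_distrib_left)
  also have "\<dots> = (if m = m' then 1 else 0)"
  proof (cases "m = m'")
    case True
    then have "z = 1" by (simp add: z_def)
    then show ?thesis using True n by simp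
  next
    case False
    have z1: "z \<noteq> 1" using cis_ne1[OF n m False] by (simp add: z_def)
    have "z ^ n = cis (real n * (2 * pi * (real m' - real m) / real n))" by (simp add: z_def DeMoivre)
    also have "\<dots> = cis (2 * pi * (real m' - real m))" using n by simp
    also have "\<dots> = 1"
    proof -
      have "real m' - real m \<in> \<int>" by (metis Ints_diff Ints_of_nat)
      then show ?thesis by (rule cis_multiple_2pi)
    qed
    finally have "(\<Sum>t<n. z ^ t) = 0" using z1 by (simp add: sum_gp_strict)
    then show ?thesis using False by simp
  qed
  finally show ?thesis .
qed


lemma cm_eqv:
  assumes e: "eqv n v v'"
  shows "eqv n (cm n theta m v) (cm n theta m v')"
  unfolding eqv_def
proof
  fix F assume F: "F \<in> Pow {..<n}"
  have "cdag t v F = cdag t v' F" for t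
    using e F unfolding eqv_def cdag_def by auto
  then show "cm n theta m v F = cm n theta m v' F" by (simp add: cm_eq)
qed

lemma am_eqv:
  assumes e: "eqv n v v'"
  shows "eqv n (am n theta m v) (am n theta m v')"
  unfolding eqv_def
proof
  fix F assume F: "F \<in> Pow {..<n}"
  have "cann t v F = cann t v' F" if "t < n" for t
    using e F that unfolding eqv_def cann_def by auto
  then show "am n theta m v F = am n theta m v' F" unfolding am_def by (intro sum.cong) auto
qed

lemma cm_zero: "cm n theta m (\<lambda>_. 0) F = 0"
proof -
  have "cdag t (\<lambda>_. 0) F = 0" for t by (simp add: cdag_def)
  then show ?thesis by (simp add: cm_eq)
qed

lemma am_vac: "am n theta m vac F = 0"
proof -
  have "cann t vac F = 0" for t by (simp add: cann_def vac_def)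
  then show ?thesis by (simp add: am_def)
qed

lemma ip_vac: "ip n vac vac = 1"
proof -
  have "ip n vac vac = (\<Sum>F\<in>Pow {..<n}. if F = {} then 1 else 0)"
    unfolding ip_def by (intro sum.cong) (auto simp: vac_def)
  also have "\<dots> = 1" by simp
  finally show ?thesis .
qed

lemma slater_props:
  assumes n: "0 < n"
  shows "distinct ms \<Longrightarrow> (\<forall>m\<in>set ms. m < n) \<Longrightarrow>
    ip n (slater n theta ms) (slater n theta ms) = 1 \<and>
    (\<forall>m. m < n \<longrightarrow> m \<notin> set ms \<longrightarrow> eqv n (am n theta m (slater n theta ms)) (\<lambda>_. 0))"
proof (induction ms)
  case Nil
  show ?case by (simp add: slater_def ip_vac am_vac eqv_def)
next
  case (Cons m0 rest)
  define v where "v = slater n theta rest"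
  have m0: "m0 < n" "m0 \<notin> set rest" using Cons.prems by auto
  have IH: "ip n v v = 1" "\<And>m. m < n \<Longrightarrow> m \<notin> set rest \<Longrightarrow> eqv n (am n theta m v) (\<lambda>_. 0)"
    using Cons.IH Cons.prems unfolding v_def by auto
  have w: "slater n theta (m0 # rest) = cm n theta m0 v" by (simp add: slater_Cons v_def)
  have cz: "eqv n (cm n theta m0 (am n theta m v)) (\<lambda>_. 0)" if "m < n" "m \<notin> set rest" for m
  proof -
    have "eqv n (cm n theta m0 (am n theta m v)) (cm n theta m0 (\<lambda>_. 0))" by (rule cm_eqv[OF IH(2)[OF that]])
    then show ?thesis by (simp add: cm_zero eqv_def)
  qed
  have key: "am n theta m (cm n theta m0 v) F = (if m = m0 then v F else 0) - cm n theta m0 (am n theta m v) F"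
    if "m < n" "F \<in> Pow {..<n}" for m F
  proof -
    have fin: "finite F" using that(2) finite_subset by auto
    have "am n theta m (cm n theta m0 v) F + cm n theta m0 (am n theta m v) F = (if m = m0 then 1 else 0) * v F"
      using am_cm[OF fin, of n theta m m0 v] ortho[OF n that(1) m0(1)] by simp
    then show ?thesis by (simp add: algebra_simps split: if_splits)
  qed
  have a0: "eqv n (am n theta m0 (cm n theta m0 v)) v"
    unfolding eqv_def using key[OF m0(1)] cz[OF m0] unfolding eqv_def by auto
  have "ip n (cm n theta m0 v) (cm n theta m0 v) = ip n v (am n theta m0 (cm n theta m0 v))"
    by (rule cm_adj)
  also have "\<dots> = ip n v v" by (rule ip_eqv[OF eqv_refl a0])
  finally have i: "ip n (slater n theta (m0 # rest)) (slater n theta (m0 # rest)) = 1" using IH(1) w by simp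
  have z: "eqv n (am n theta m (slater n theta (m0 # rest))) (\<lambda>_. 0)" if "m < n" "m \<notin> set (m0 # rest)" for m
    unfolding w eqv_def using key[OF that(1)] cz[OF that(1)] that unfolding eqv_def by auto
  show ?case using i z by blast
qed

lemma slater_nz:
  assumes "0 < n" "distinct ms" "\<forall>m\<in>set ms. m < n"
  shows "\<exists>F\<in>Pow {..<n}. slater n theta ms F \<noteq> 0"
proof (rule ccontr)
  assume "\<not> ?thesis"
  then have "ip n (slater n theta ms) (slater n theta ms) = 0" unfolding ip_def by (intro sum.neutral) auto
  then show False using slater_props[OF assms(1) assms(2,3), of theta] by simp
qed

lemma slater_card: "finite F \<Longrightarrow> slater n theta ms F \<noteq> 0 \<Longrightarrow> card F = length ms"
proof (induction ms arbitrary: F)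
  case Nil
  then show ?case by (simp add: slater_def vac_def split: if_splits)
next
  case (Cons m0 rest)
  have "(\<Sum>t<n. fm n theta m0 t * cdag t (slater n theta rest) F) \<noteq> 0"
    using Cons.prems by (simp add: slater_Cons cm_eq)
  then obtain t where "cdag t (slater n theta rest) F \<noteq> 0" by (metis (no_types, lifting) mult_zero_right sum.neutral)
  then have t: "t \<in> F" "slater n theta rest (F - {t}) \<noteq> 0" by (auto simp: cdag_def split: if_splits)
  have "card (F - {t}) = length rest" using Cons.IH[of "F - {t}"] t Cons.prems by auto
  then show ?case using t Cons.prems card_Suc_Diff1 by fastforce
qed


context circphi begin

lemma final_from_decomp:
  assumes A: "A \<subseteq> {..<n}"
    and V: "\<forall>x\<in>Pow A. cunit n (Vf x) \<and> loc n A (Vf x)"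
    and W: "\<forall>y\<in>Pow ({..<n} - A). cunit n (Wf y) \<and> loc n ({..<n} - A) (Wf y)"
    and H2: "\<forall>F\<in>Pow {..<n}. card F = length ms \<longrightarrow>
       eqv n (UT n u F phi) (mvec n (Vf (F \<inter> A)) (mvec n (Wf (F - A)) (UT n u (Tz (card (F \<inter> A))) phi)))"
    and TG: "\<forall>af\<in>Pow A. \<forall>bf\<in>Pow ({..<n} - A). card (af \<union> bf) = length ms \<longrightarrow>
       Tz (card af) \<subseteq> {..<n} \<and> card (Tz (card af)) \<le> length ms"
    and dist: "distinct ms" and msn: "\<forall>m\<in>set ms. m < n"
    and nphi: "nrm n phi = 1"
  shows "renyi2 n A (slater n theta ms)
           + Min ((\<lambda>T. renyi2 n A (UT n u T phi)) ` {T. T \<subseteq> {..<n} \<and> card T \<le> length ms})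
         \<le> renyi2_joint n A (\<lambda>S F. slater n theta ms F * UT n u F phi S)"
proof -
  let ?s = "slater n theta ms"
  let ?Set = "{T. T \<subseteq> {..<n} \<and> card T \<le> length ms}"
  let ?m0 = "Min ((\<lambda>T. renyi2 n A (UT n u T phi)) ` ?Set)"
  have n0: "0 < n" using n2 by simp
  have finSet: "finite ?Set" by (rule finite_subset[of _ "Pow {..<n}"]) auto
  have H3: "\<forall>F\<in>Pow {..<n}. ?s F \<noteq> 0 \<longrightarrow> card F = length ms"
    using slater_card finite_subset by blast
  have H2': "\<forall>F\<in>Pow {..<n}. ?s F \<noteq> 0 \<longrightarrow>
     eqv n (UT n u F phi) (mvec n (Vf (F \<inter> A)) (mvec n (Wf (F - A)) ((\<lambda>k. UT n u (Tz k) phi) ((\<lambda>k. k) (card (F \<inter> A))))))"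
    using H2 H3 by auto
  have nz: "\<exists>F\<in>Pow {..<n}. ?s F \<noteq> 0" by (rule slater_nz[OF n0 dist msn])
  have good: "\<forall>af\<in>Pow A. \<forall>bf\<in>Pow ({..<n} - A). ?s (af \<union> bf) \<noteq> 0 \<longrightarrow>
        0 < purity n A ((\<lambda>k. UT n u (Tz k) phi) ((\<lambda>k. k) (card af))) \<and>
        ?m0 \<le> renyi2 n A ((\<lambda>k. UT n u (Tz k) phi) ((\<lambda>k. k) (card af)))"
  proof (intro ballI impI)
    fix af bf assume af: "af \<in> Pow A" and bf: "bf \<in> Pow ({..<n} - A)" and s: "?s (af \<union> bf) \<noteq> 0"
    have "af \<union> bf \<in> Pow {..<n}" using af bf A by auto
    then have c: "card (af \<union> bf) = length ms" using H3 s by blast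
    then have T: "Tz (card af) \<subseteq> {..<n}" "card (Tz (card af)) \<le> length ms" using TG af bf by auto
    have "nrm n (UT n u (Tz (card af)) phi) = 1" using nrm_UT[OF T(1)] nphi by simp
    then have p: "0 < purity n A (UT n u (Tz (card af)) phi)" by (intro purity_pos[OF A]) simp
    have "Tz (card af) \<in> ?Set" using T by simp
    then have "?m0 \<le> renyi2 n A (UT n u (Tz (card af)) phi)" using finSet by (intro Min_le) auto
    then show "0 < purity n A ((\<lambda>k. UT n u (Tz k) phi) ((\<lambda>k. k) (card af))) \<and>
        ?m0 \<le> renyi2 n A ((\<lambda>k. UT n u (Tz k) phi) ((\<lambda>k. k) (card af)))" using p by simp
  qed
  show ?thesis
    by (rule generic_ineq[where A=A and n=n and Vf=Vf and Wf=Wf and s="?s" and chi="\<lambda>F. UT n u F phi"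
          and xi="\<lambda>k. UT n u (Tz k) phi" and G="\<lambda>k. k" and M="length ms",
          OF A V W H2' H3 nz good])
qed

end

context circphi begin

lemma contiguous_case:
  assumes pq: "p \<le> q" "q \<le> n" and dist: "distinct ms" and msn: "\<forall>m\<in>set ms. m < n"
    and nphi: "nrm n phi = 1"
  shows "renyi2 n {p..<q} (slater n theta ms)
           + Min ((\<lambda>T. renyi2 n {p..<q} (UT n u T phi)) ` {T. T \<subseteq> {..<n} \<and> card T \<le> length ms})
         \<le> renyi2_joint n {p..<q} (\<lambda>S F. slater n theta ms F * UT n u F phi S)"
proof -
  obtain Vf Wf where VW: "\<forall>x\<in>Pow {p..<q}. uni n (Vf x) \<and> loc n {p..<q} (Vf x)"
     "\<forall>y\<in>Pow ({..<n} - {p..<q}). uni n (Wf y) \<and> loc n ({..<n} - {p..<q}) (Wf y)"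
     "\<forall>F\<in>Pow {..<n}. eqv n (UT n u F phi)
        (mvec n (Vf (F \<inter> {p..<q})) (mvec n (Wf (F - {p..<q})) (UT n u {p..<p + card (F \<inter> {p..<q})} phi)))"
    using decomp[OF pq] by blast
  have A: "{p..<q} \<subseteq> {..<n}" using pq by auto
  show ?thesis
  proof (rule final_from_decomp[where Tz="\<lambda>k. {p..<p + k}", OF A _ _ _ _ dist msn nphi])
    show "\<forall>x\<in>Pow {p..<q}. cunit n (Vf x) \<and> loc n {p..<q} (Vf x)" using VW(1) uni_def by blast
    show "\<forall>y\<in>Pow ({..<n} - {p..<q}). cunit n (Wf y) \<and> loc n ({..<n} - {p..<q}) (Wf y)" using VW(2) uni_def by blast
    show "\<forall>F\<in>Pow {..<n}. card F = length ms \<longrightarrow> eqv n (UT n u F phi)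
        (mvec n (Vf (F \<inter> {p..<q})) (mvec n (Wf (F - {p..<q})) (UT n u {p..<p + card (F \<inter> {p..<q})} phi)))"
      using VW(3) by blast
    show "\<forall>af\<in>Pow {p..<q}. \<forall>bf\<in>Pow ({..<n} - {p..<q}). card (af \<union> bf) = length ms \<longrightarrow>
       {p..<p + card af} \<subseteq> {..<n} \<and> card {p..<p + card af} \<le> length ms"
    proof (intro ballI impI)
      fix af bf assume af: "af \<in> Pow {p..<q}" and bf: "bf \<in> Pow ({..<n} - {p..<q})" and c: "card (af \<union> bf) = length ms"
      have "card af \<le> card {p..<q}" using af by (intro card_mono) auto
      then have "p + card af \<le> n" using pq by simp
      moreover have "card af \<le> card (af \<union> bf)"
        by (rule card_mono) (use af bf finite_subset[of bf "{..<n}"] finite_subset[of af "{p..<q}"] in auto)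
      ultimately show "{p..<p + card af} \<subseteq> {..<n} \<and> card {p..<p + card af} \<le> length ms" using c by auto
    qed
  qed
qed

lemma wrapped_case:
  assumes pq: "q' \<le> p'" "p' \<le> n" and dist: "distinct ms" and msn: "\<forall>m\<in>set ms. m < n"
    and nphi: "nrm n phi = 1"
  shows "renyi2 n ({..<n} - {q'..<p'}) (slater n theta ms)
           + Min ((\<lambda>T. renyi2 n ({..<n} - {q'..<p'}) (UT n u T phi)) ` {T. T \<subseteq> {..<n} \<and> card T \<le> length ms})
         \<le> renyi2_joint n ({..<n} - {q'..<p'}) (\<lambda>S F. slater n theta ms F * UT n u F phi S)"
proof -
  define X where "X = {q'..<p'}"
  define A where "A = {..<n} - X"
  obtain VX WX where VW: "\<forall>x\<in>Pow X. uni n (VX x) \<and> loc n X (VX x)"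
     "\<forall>y\<in>Pow A. uni n (WX y) \<and> loc n A (WX y)"
     "\<forall>F\<in>Pow {..<n}. eqv n (UT n u F phi)
        (mvec n (VX (F \<inter> X)) (mvec n (WX (F - X)) (UT n u {q'..<q' + card (F \<inter> X)} phi)))"
    using decomp[OF pq] unfolding X_def A_def by blast
  have XA: "{..<n} - A = X" using pq by (auto simp: A_def X_def)
  have Asub: "A \<subseteq> {..<n}" by (auto simp: A_def)
  have fX: "finite X" by (simp add: X_def)
  have "renyi2 n A (slater n theta ms)
           + Min ((\<lambda>T. renyi2 n A (UT n u T phi)) ` {T. T \<subseteq> {..<n} \<and> card T \<le> length ms})
         \<le> renyi2_joint n A (\<lambda>S F. slater n theta ms F * UT n u F phi S)"
  proof (rule final_from_decomp[where Tz="\<lambda>k. {q'..<q' + (length ms - k)}" and Vf=WX and Wf=VX, OF Asub _ _ _ _ dist msn nphi])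
    show "\<forall>x\<in>Pow A. cunit n (WX x) \<and> loc n A (WX x)" using VW(2) uni_def by blast
    show "\<forall>y\<in>Pow ({..<n} - A). cunit n (VX y) \<and> loc n ({..<n} - A) (VX y)" unfolding XA using VW(1) uni_def by blast
    show "\<forall>F\<in>Pow {..<n}. card F = length ms \<longrightarrow> eqv n (UT n u F phi)
        (mvec n (WX (F \<inter> A)) (mvec n (VX (F - A)) (UT n u {q'..<q' + (length ms - card (F \<inter> A))} phi)))"
    proof (intro ballI impI)
      fix F assume F: "F \<in> Pow {..<n}" and c: "card F = length ms"
      have e1: "F \<inter> A = F - X" "F - A = F \<inter> X" using F by (auto simp: A_def)
      have fF: "finite F" using F finite_subset by auto
      have FF: "F = (F \<inter> X) \<union> (F - X)" by blast
      have "card ((F \<inter> X) \<union> (F - X)) = card (F \<inter> X) + card (F - X)"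
        by (rule card_Un_disjoint) (use fF in auto)
      then have "card F = card (F \<inter> X) + card (F - X)" using FF by simp
      then have e2: "length ms - card (F - X) = card (F \<inter> X)" using c by simp
      have lX: "loc n X (VX (F \<inter> X))" using VW(1) by auto
      have lA: "loc n A (WX (F - X))" using VW(2) F by (auto simp: A_def)
      have d: "X \<inter> A = {}" by (auto simp: A_def)
      have "eqv n (UT n u F phi) (mvec n (VX (F \<inter> X)) (mvec n (WX (F - X)) (UT n u {q'..<q' + card (F \<inter> X)} phi)))"
        using VW(3) F by blast
      also have "eqv n \<dots> (mvec n (WX (F - X)) (mvec n (VX (F \<inter> X)) (UT n u {q'..<q' + card (F \<inter> X)} phi)))"
        by (rule mvec_comm[OF lX lA d])
      finally show "eqv n (UT n u F phi)
        (mvec n (WX (F \<inter> A)) (mvec n (VX (F - A)) (UT n u {q'..<q' + (length ms - card (F \<inter> A))} phi)))"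
        unfolding e1 e2 .
    qed
    show "\<forall>af\<in>Pow A. \<forall>bf\<in>Pow ({..<n} - A). card (af \<union> bf) = length ms \<longrightarrow>
       {q'..<q' + (length ms - card af)} \<subseteq> {..<n} \<and> card {q'..<q' + (length ms - card af)} \<le> length ms"
    proof (intro ballI impI)
      fix af bf assume af: "af \<in> Pow A" and bf: "bf \<in> Pow ({..<n} - A)" and c: "card (af \<union> bf) = length ms"
      have bX: "bf \<subseteq> X" using bf XA by auto
      have fa: "finite af" by (rule finite_subset[of af "{..<n}"]) (use af Asub in auto)
      have fb: "finite bf" by (rule finite_subset[OF bX fX])
      have "af \<inter> bf = {}" using af bf by auto
      then have "card (af \<union> bf) = card af + card bf" using fa fb by (simp add: card_Un_disjoint)
      then have "length ms - card af = card bf" using c by simp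
      moreover have "card bf \<le> card X" using bX fX by (intro card_mono)
      ultimately have "q' + (length ms - card af) \<le> p'" using pq by (simp add: X_def)
      then show "{q'..<q' + (length ms - card af)} \<subseteq> {..<n} \<and> card {q'..<q' + (length ms - card af)} \<le> length ms"
        using pq by auto
    qed
  qed
  then show ?thesis by (simp add: A_def X_def)
qed

end

lemma cyc_cases:
  assumes "cyclic_interval n A"
  shows "(\<exists>p q. p \<le> q \<and> q \<le> n \<and> A = {p..<q}) \<or> (\<exists>p q. q \<le> p \<and> p \<le> n \<and> A = {..<n} - {q..<p})"
proof -
  obtain a l where al: "a < n" "l \<le> n" "A = {(a + j) mod n | j. j < l}"
    using assms unfolding cyclic_interval_def by blast
  show ?thesis
  proof (cases "a + l \<le> n")
    case True
    have "A = {a..<a + l}"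
    proof
      show "A \<subseteq> {a..<a + l}"
      proof
        fix x assume "x \<in> A"
        then obtain j where j: "j < l" "x = (a + j) mod n" using al by blast
        then have "x = a + j" using True by simp
        then show "x \<in> {a..<a + l}" using j by simp
      qed
      show "{a..<a + l} \<subseteq> A"
      proof
        fix x assume x: "x \<in> {a..<a + l}"
        then have "x = (a + (x - a)) mod n" "x - a < l" using True by auto
        then show "x \<in> A" using al by blast
      qed
    qed
    then have "a \<le> a + l \<and> a + l \<le> n \<and> A = {a..<a + l}" using True by simp
    then show ?thesis by blast
  next
    case False
    have "A = {..<n} - {a + l - n..<a}"
    proof
      show "A \<subseteq> {..<n} - {a + l - n..<a}"
      proof
        fix x assume "x \<in> A"
        then obtain j where j: "j < l" "x = (a + j) mod n" using al by blast
        have xn: "x < n" using j al by simp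
        show "x \<in> {..<n} - {a + l - n..<a}"
        proof (cases "a + j < n")
          case True
          then have "x = a + j" using j by simp
          then show ?thesis using xn by simp
        next
          case False
          then have ajn: "n \<le> a + j" by simp
          then have "x = a + j - n" using j al le_mod_geq[of n "a + j"] by simp
          then have "x < a + l - n" using ajn j by arith
          then show ?thesis using xn by simp
        qed
      qed
      show "{..<n} - {a + l - n..<a} \<subseteq> A"
      proof
        fix x assume x: "x \<in> {..<n} - {a + l - n..<a}"
        show "x \<in> A"
        proof (cases "a \<le> x")
          case True
          then have "x = (a + (x - a)) mod n" "x - a < l" using x False by auto
          then show ?thesis using al by blast
        next
          case nle: False
          then have xl: "x < a + l - n" using x by auto
          have "(a + (x + n - a)) mod n = x" using x al nle by (simp add: le_mod_geq)
          moreover have "x + n - a < l" using xl nle al by auto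
          ultimately show ?thesis using al by (metis (mono_tags, lifting) mem_Collect_eq)
        qed
      qed
    qed
    moreover have "a + l - n \<le> a" "a \<le> n" using al by auto
    ultimately show ?thesis by blast
  qed
qed


theorem theoremA1:
  fixes n :: nat and u :: "nat \<Rightarrow> qmat" and c :: complex
    and phi :: qvec and theta :: real and ms :: "nat list" and A :: "nat set"
  assumes "n \<ge> 2"
    and "\<forall>t < n - 1. unitary_on n (u t) \<and> acts_on_pair n (u t) t"
    and "cmod c = 1"
    and "\<forall>S\<in>Pow {..<n}. \<forall>T\<in>Pow {..<n}. u (n - 1) S T = c * idm S T"
    and "(\<Sum>S\<in>Pow {..<n}. (cmod (phi S))\<^sup>2) = 1"
    and "\<forall>S\<in>Pow {..<n}. mvec n (Uprod n u n) phi S = exp (\<i> * complex_of_real theta) * phi S"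
    and "distinct ms" and "\<forall>m\<in>set ms. m < n"
    and "cyclic_interval n A"
  shows "renyi2_joint n A (Psi n u theta phi ms)
         \<ge> renyi2 n A (slater n theta ms)
           + Min ((\<lambda>T. renyi2 n A (UT n u T phi)) ` {T. T \<subseteq> {..<n} \<and> card T \<le> length ms})"
proof -
  interpret circ n u c using assms(1-4) by unfold_locales
  define lam where "lam = exp (\<i> * complex_of_real theta)"
  interpret circphi n u c phi lam
  proof unfold_locales
    show "cmod lam = 1" unfolding lam_def cis_conv_exp[symmetric] by simp
    show "eqv n (mvec n (Uprod n u n) phi) (\<lambda>S. lam * phi S)"
      using assms(6) by (simp add: eqv_def lam_def)
  qed
  have nphi: "nrm n phi = 1" using assms(5) by (simp add: nrm_def)
  have P: "Psi n u theta phi ms = (\<lambda>S F. slater n theta ms F * UT n u F phi S)"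
    by (intro ext) (simp add: Psi_def)
  from cyc_cases[OF assms(9)] show ?thesis
  proof
    assume "\<exists>p q. p \<le> q \<and> q \<le> n \<and> A = {p..<q}"
    then obtain p q where pq: "p \<le> q" "q \<le> n" and Aeq: "A = {p..<q}" by blast
    show ?thesis using contiguous_case[OF pq assms(7) assms(8) nphi] unfolding P Aeq by simp
  next
    assume "\<exists>p q. q \<le> p \<and> p \<le> n \<and> A = {..<n} - {q..<p}"
    then obtain p q where pq: "q \<le> p" "p \<le> n" and Aeq: "A = {..<n} - {q..<p}" by blast
    show ?thesis using wrapped_case[OF pq assms(7) assms(8) nphi] unfolding P Aeq by simp
  qed
qed


end
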